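(* Let $A\in\mathbb{R}^{n\times n}$, $B\in\mathbb{R}^{n\times m}$ with $(A,B)$ controllable, and assume the subgraph $\mathcal G_{\sigma(t)}$ is undirected for all $t\ge0$. Given any $\alpha>0$ and $t^*>0$, let $K=\mu B^TW_{\mathrm c}^{-1}(\alpha,t^* )$ with $\mu\ge1/\lambda_H$, and let $\lambda_M,\lambda_m$ be the largest and smallest eigenvalues of $W_{\mathrm c}(0,t^* )$. Then $$\|\Phi_j(t)\|\le C_0(t^* )\,e^{-\alpha t}\quad\text{for all }t\in[0,\tau_j]\text{ and all }j=0,1,2,\dots,$$ where $C_0(t^* )=\sqrt{\lambda_M/\lambda_m}\;e^{\alpha t^*/2}\ge1$.
   Context: $\sigma:[0,\infty)\to\mathcal P=\{1,\dots,n_0\}$ is a piecewise constant switching signal with switching instants $0=t_0<t_1<\cdots$, $t_{j+1}-t_j\ge\tau>0$, $\sigma$ constant on $[t_j,t_{j+1})$; $\tau_j:=t_{j+1}-t_j$. For each $p$, $\bar{\mathcal G}_p$ is a graph on nodes $\{0,\dots,N\}$ with edges $(j,i)$, $j\ne i$; $a_{ij}(t)=1$ if $(j,i)$ is an edge of $\bar{\mathcal G}_{\sigma(t)}$, else $0$. $\mathcal G_{\sigma(t)}$ is the subgraph on $\{1,\dots,N\}$ (undirected: $(i,j)$ edge iff $(j,i)$ edge), with Laplacian $\mathcal L_{\sigma(t)}$ ($l_{ii}=\sum_{j=1}^Na_{ij}(t)$, $l_{ij}=-a_{ij}(t)$). $\mathcal H_{\sigma(t)}=\mathcal L_{\sigma(t)}+\mathrm{diag}(a_{10}(t),\dots,a_{N0}(t))$,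 which is symmetric positive semidefinite when $\mathcal G_{\sigma(t)}$ is undirected. $\lambda_H=\frac{4}{N(N^2-N+4)}$. For each $j$, let $n_j$ be the nullity of $\mathcal H_{\sigma(t_j)}$, let its eigenvalues be $0=\lambda_1^{(j)}=\dots=\lambda_{n_j}^{(j)}<\lambda_{n_j+1}^{(j)}\le\dots\le\lambda_N^{(j)}$ with corresponding orthonormal eigenvectors $\xi_1^{(j)},\dots,\xi_N^{(j)}$, and set $\Gamma_{\sigma(t_j)}=[\xi_{n_j+1}^{(j)}\ \cdots\ \xi_N^{(j)}]\in\mathbb{R}^{N\times(N-n_j)}$, $\bar\Gamma_{\sigma(t_j)}=\Gamma_{\sigma(t_j)}\otimes I_n$, $M_j=\mathrm{diag}\{A-\lambda_{n_j+1}^{(j)}BK,\dots,A-\lambda_N^{(j)}BK\}$ (block diagonal), and $\Phi_j(t)=\bar\Gamma_{\sigma(t_j)}e^{M_jt}\bar\Gamma_{\sigma(t_j)}^T\in\mathbb{R}^{Nn\times Nn}$. The weighted controllability Gramian is $W_{\mathrm c}(\alpha,t^* )=\int_0^{t^*}e^{-\alpha t}e^{-\frac{A}{2}t}BB^Te^{-\frac{A^T}{2}t}\,dt$ (positive definite under controllability). $\|\cdot\|$ is the matrix norm induced by the Euclidean norm. *)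

theory Defs
  imports "HOL-Analysis.Analysis"
begin

primrec mpow :: "real^'n^'n \<Rightarrow> nat \<Rightarrow> real^'n^'n" where
  "mpow M 0 = mat 1"
| "mpow M (Suc k) = M ** mpow M k"

definition mexp :: "real^'n^'n \<Rightarrow> real^'n^'n" where
  "mexp M = (\<Sum>k. (1 / fact k) *\<^sub>R mpow M k)"

text \<open>Controllability of (A,B): the Kalman matrix [B, AB, ..., A^(n-1) B] has full rank n,
  i.e. its column space is all of R^n.\<close>
definition controllable :: "real^'n^'n \<Rightarrow> real^'m^'n \<Rightarrow> bool" where
  "controllable A B \<longleftrightarrow>
     span {(mpow A k ** B) *v v | k v. k < CARD('n)} = UNIV"

definition is_eigenvalue :: "real^'n^'n \<Rightarrow> real \<Rightarrow> bool" where
  "is_eigenvalue W l \<longleftrightarrow> (\<exists>v. v \<noteq> 0 \<and> W *v v = l *\<^sub>R v)"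

definition gramian :: "real^'n^'n \<Rightarrow> real^'m^'n \<Rightarrow> real \<Rightarrow> real \<Rightarrow> real^'n^'n" where
  "gramian A B \<alpha> ts = integral {0..ts}
     (\<lambda>t. exp (- \<alpha> * t) *\<^sub>R
          (mexp ((- t / 2) *\<^sub>R A) ** B ** transpose B ** mexp ((- t / 2) *\<^sub>R transpose A)))"

text \<open>Graphs: for mode p, adj p i j means (j,i) is an edge among followers (a_ij = 1),
  pin p i means (0,i) is an edge from the leader (a_i0 = 1).\<close>
definition aij :: "(nat \<Rightarrow> 'N \<Rightarrow> 'N \<Rightarrow> bool) \<Rightarrow> nat \<Rightarrow> 'N \<Rightarrow> 'N \<Rightarrow> real" where
  "aij adj p i j = (if adj p i j then 1 else 0)"

definition laplacian :: "(nat \<Rightarrow> 'N::finite \<Rightarrow> 'N \<Rightarrow> bool) \<Rightarrow> nat \<Rightarrow> real^'N^'N" where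
  "laplacian adj p = (\<chi> i j. if i = j then (\<Sum>k\<in>UNIV. aij adj p i k) else - aij adj p i j)"

definition Hmat :: "(nat \<Rightarrow> 'N::finite \<Rightarrow> 'N \<Rightarrow> bool) \<Rightarrow> (nat \<Rightarrow> 'N \<Rightarrow> bool) \<Rightarrow> nat \<Rightarrow> real^'N^'N" where
  "Hmat adj pin p = laplacian adj p + (\<chi> i j. if i = j then (if pin p i then 1 else 0) else 0)"

definition lambda_H :: "nat \<Rightarrow> real" where
  "lambda_H N = 4 / (real N * (real N ^ 2 - real N + 4))"

text \<open>Phi_j(t) = Gamma_bar e^(M_j t) Gamma_bar^T, with Gamma_bar = Gamma (x) I_n and
  M_j block diagonal with blocks A - lambda_k B K (k = n_j+1..N); written out blockwise
  (block (i,i') equals sum_k xi_k(i) xi_k(i') e^((A - lambda_k B K) t)).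
  Eigen-indices are 0-based here: k ranges over {nj..<N}.\<close>
definition Phi :: "real^'n^'n \<Rightarrow> real^'m^'n \<Rightarrow> real^'n^'m \<Rightarrow> nat \<Rightarrow> (nat \<Rightarrow> real)
    \<Rightarrow> (nat \<Rightarrow> real^'N) \<Rightarrow> real \<Rightarrow> real^('N::finite \<times> 'n)^('N \<times> 'n)" where
  "Phi A B K nj lam xi t = (\<chi> r c.
     \<Sum>k\<in>{nj..<CARD('N)}. xi k $ fst r * xi k $ fst c *
        mexp (t *\<^sub>R (A - lam k *\<^sub>R (B ** K))) $ snd r $ snd c)"

end

theory Submission
  imports Defs "HOL-Library.Transitive_Closure_Table"
begin

typedef (overloaded) 'a endo = "UNIV :: ('a::euclidean_space \<Rightarrow>\<^sub>L 'a) set" morphisms Rep_endo Abs_endo by simp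
setup_lifting type_definition_endo

instantiation endo :: (euclidean_space) real_normed_algebra_1
begin
lift_definition norm_endo :: "'a endo \<Rightarrow> real" is norm .
lift_definition minus_endo :: "'a endo \<Rightarrow> 'a endo \<Rightarrow> 'a endo" is "(-)" .
lift_definition plus_endo :: "'a endo \<Rightarrow> 'a endo \<Rightarrow> 'a endo" is "(+)" .
lift_definition uminus_endo :: "'a endo \<Rightarrow> 'a endo" is "uminus" .
lift_definition zero_endo :: "'a endo" is "0" .
lift_definition one_endo :: "'a endo" is "id_blinfun" .
lift_definition times_endo :: "'a endo \<Rightarrow> 'a endo \<Rightarrow> 'a endo" is "(o\<^sub>L)" .
lift_definition scaleR_endo :: "real \<Rightarrow> 'a endo \<Rightarrow> 'a endo" is "scaleR" .
definition dist_endo :: "'a endo \<Rightarrow> 'a endo \<Rightarrow> real" where "dist_endo a b = norm (a - b)"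
definition uniformity_endo :: "('a endo \<times> 'a endo) filter" where
  "uniformity_endo = (INF e\<in>{0 <..}. principal {(x, y). dist x y < e})"
definition open_endo :: "'a endo set \<Rightarrow> bool"
  where "open_endo S = (\<forall>x\<in>S. \<forall>\<^sub>F (x', y) in uniformity. x' = x \<longrightarrow> y \<in> S)"
definition sgn_endo :: "'a endo \<Rightarrow> 'a endo" where "sgn_endo x = scaleR (inverse (norm x)) x"


lemma id_blinfun_nz: "(id_blinfun :: 'a \<Rightarrow>\<^sub>L 'a) \<noteq> 0"
proof
  assume "(id_blinfun :: 'a \<Rightarrow>\<^sub>L 'a) = 0"
  hence "blinfun_apply (id_blinfun :: 'a \<Rightarrow>\<^sub>L 'a) (SOME b. b \<in> Basis) = 0" by simp
  moreover have "(SOME b. b \<in> (Basis::'a set)) \<noteq> 0"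
    by (metis (mono_tags, lifting) nonempty_Basis someI_ex all_not_in_conv zero_not_in_Basis)
  ultimately show False by simp
qed

instance
  apply standard
  unfolding dist_endo_def open_endo_def sgn_endo_def uniformity_endo_def
  apply (rule refl | (transfer; auto simp: algebra_simps blinfun.bilinear_simps norm_blinfun_compose
     norm_triangle_ineq id_blinfun_nz intro!: blinfun_eqI))+
  done
end


lemma norm_endo_Rep: "norm x = norm (Rep_endo x)" by transfer simp
lemma Rep_endo_diff: "Rep_endo (x - y) = Rep_endo x - Rep_endo y" by transfer simp

instance endo :: (euclidean_space) banach
proof
  fix X :: "nat \<Rightarrow> 'a endo"
  assume "Cauchy X"
  hence "Cauchy (\<lambda>n. Rep_endo (X n))"
    unfolding Cauchy_def dist_norm by (simp add: norm_endo_Rep Rep_endo_diff[symmetric])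
  then obtain L where L: "(\<lambda>n. Rep_endo (X n)) \<longlonglongrightarrow> L"
    using convergent_def Cauchy_convergent_iff by blast
  have "X \<longlonglongrightarrow> Abs_endo L"
    using L unfolding tendsto_iff dist_norm
    by (simp add: norm_endo_Rep Rep_endo_diff Abs_endo_inverse)
  thus "convergent X" unfolding convergent_def by blast
qed

definition toE :: "real^'n^'n \<Rightarrow> (real^'n) endo" where
  "toE M = Abs_endo (Blinfun (\<lambda>x. M *v x))"
definition ofE :: "(real^'n) endo \<Rightarrow> real^'n^'n" where
  "ofE X = matrix (blinfun_apply (Rep_endo X))"
definition app :: "(real^'n) endo \<Rightarrow> real^'n \<Rightarrow> real^'n" where
  "app X x = blinfun_apply (Rep_endo X) x"

lemma bl_mv: "bounded_linear (\<lambda>x. (M::real^'n^'n) *v x)"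
  by (simp add: linear_conv_bounded_linear)

lemma app_toE[simp]: "app (toE M) x = M *v x"
  by (simp add: app_def toE_def Abs_endo_inverse bounded_linear_Blinfun_apply[OF bl_mv])

lemma ofE_toE[simp]: "ofE (toE M) = M"
  by (simp add: ofE_def toE_def Abs_endo_inverse bounded_linear_Blinfun_apply[OF bl_mv])

lemma app_ofE: "ofE X *v x = app X x"
  unfolding ofE_def app_def
  by (simp add: matrix_works blinfun.bounded_linear_right bounded_linear.linear)

lemma endo_eqI: "(\<And>x. app X x = app Y x) \<Longrightarrow> X = Y"
  unfolding app_def by (metis Rep_endo_inject blinfun_eqI)

lemma toE_ofE[simp]: "toE (ofE X) = X"
  by (rule endo_eqI) (simp add: app_ofE)

lemma app_mult[simp]: "app (X * Y) x = app X (app Y x)"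
  unfolding app_def by transfer simp
lemma app_one[simp]: "app 1 x = x"
  unfolding app_def by transfer simp
lemma app_add[simp]: "app (X + Y) x = app X x + app Y x"
  unfolding app_def by transfer (simp add: blinfun.bilinear_simps)
lemma app_diff[simp]: "app (X - Y) x = app X x - app Y x"
  unfolding app_def by transfer (simp add: blinfun.bilinear_simps)
lemma app_scaleR[simp]: "app (c *\<^sub>R X) x = c *\<^sub>R app X x"
  unfolding app_def by transfer (simp add: blinfun.bilinear_simps)
lemma app_zero[simp]: "app 0 x = 0"
  unfolding app_def by transfer simp

lemma toE_mult: "toE (M ** N) = toE M * toE N"
  by (rule endo_eqI) (simp add: matrix_vector_mul_assoc)
lemma toE_one: "toE (mat 1) = 1"
  by (rule endo_eqI) simp
lemma toE_add: "toE (M + N) = toE M + toE N"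
  by (rule endo_eqI) (simp add: matrix_vector_mult_add_rdistrib)
lemma toE_diff: "toE (M - N) = toE M - toE N"
  by (rule endo_eqI) (simp add: matrix_vector_mult_diff_rdistrib)
lemma toE_scaleR: "toE (c *\<^sub>R M) = c *\<^sub>R toE M"
  by (rule endo_eqI) (simp add: scaleR_matrix_vector_assoc)

lemma toE_inj: "toE M = toE N \<Longrightarrow> M = N"
  by (metis ofE_toE)

lemma ofE_mult: "ofE (X * Y) = ofE X ** ofE Y"
  by (rule toE_inj) (simp add: toE_mult)
lemma ofE_add: "ofE (X + Y) = ofE X + ofE Y"
  by (rule toE_inj) (simp add: toE_add)
lemma ofE_scaleR: "ofE (c *\<^sub>R X) = c *\<^sub>R ofE X"
  by (rule toE_inj) (simp add: toE_scaleR)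

lemma norm_app: "norm (app X x) \<le> norm X * norm x"
  unfolding app_def by transfer (rule norm_blinfun)

lemma norm_le_sum_rows: "norm (x::'a::real_normed_vector^'n) \<le> (\<Sum>i\<in>UNIV. norm (x$i))"
  by (simp add: norm_vec_def L2_set_le_sum)

lemma ofE_entry: "ofE X $ i $ j = app X (axis j 1) $ i"
  by (simp add: ofE_def app_def matrix_def)

lemma norm_ofE: "norm (ofE X) \<le> real CARD('n) * real CARD('n) * norm (X :: (real^'n) endo)"
proof -
  have e: "\<bar>ofE X $ i $ j\<bar> \<le> norm X" for i j
  proof -
    have "\<bar>ofE X $ i $ j\<bar> \<le> norm (app X (axis j 1))"
      unfolding ofE_entry by (rule component_le_norm_cart)
    also have "\<dots> \<le> norm X * norm (axis j (1::real))" by (rule norm_app)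
    finally show ?thesis by simp
  qed
  have "norm (ofE X) \<le> (\<Sum>i\<in>UNIV. norm (ofE X $ i))" by (rule norm_le_sum_rows)
  also have "\<dots> \<le> (\<Sum>i\<in>(UNIV::'n set). \<Sum>j\<in>(UNIV::'n set). norm X)"
    by (rule sum_mono, rule order_trans[OF norm_le_l1_cart], rule sum_mono, rule e)
  finally show ?thesis by (simp add: algebra_simps)
qed

lemma bl_ofE: "bounded_linear (ofE :: (real^'n) endo \<Rightarrow> _)"
proof
  show "ofE (x + y) = ofE x + ofE y" for x y :: "(real^'n) endo" by (rule ofE_add)
  show "ofE (r *\<^sub>R x) = r *\<^sub>R ofE x" for r and x :: "(real^'n) endo" by (rule ofE_scaleR)
  show "\<exists>K. \<forall>x::(real^'n) endo. norm (ofE x) \<le> norm x * K"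
    using norm_ofE by (metis mult.commute)
qed

lemma bl_app: "bounded_linear (\<lambda>X. app X x)"
proof
  show "\<exists>K. \<forall>X. norm (app X x) \<le> norm X * K" using norm_app by blast
qed simp_all

lemma toE_mpow: "toE (mpow M k) = toE M ^ k"
  by (induction k) (simp_all add: toE_one toE_mult)

lemma mexp_ofE: "mexp M = ofE (exp (toE M))"
proof -
  have "ofE (exp (toE M)) = (\<Sum>n. ofE (toE M ^ n /\<^sub>R fact n))"
    unfolding exp_def by (rule bounded_linear.suminf[OF bl_ofE summable_exp_generic])
  also have "\<dots> = (\<Sum>n. (1 / fact n) *\<^sub>R mpow M n)"
    by (simp add: ofE_scaleR toE_mpow[symmetric] divide_inverse)
  finally show ?thesis by (simp add: mexp_def)
qed

lemma toE_mexp: "toE (mexp M) = exp (toE M)"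
  by (simp add: mexp_ofE)

lemma ofE_one: "ofE (1 :: (real^'n) endo) = mat 1"
  by (metis ofE_toE toE_one)

lemma mexp_zero: "mexp (0::real^'n^'n) = mat 1"
proof -
  have "toE (0::real^'n^'n) = 0" by (rule endo_eqI) simp
  thus ?thesis by (simp add: mexp_ofE ofE_one)
qed

lemma mpow_Suc': "mpow M (Suc k) = mpow M k ** M"
  by (induction k) (simp_all add: matrix_mul_assoc)

lemma transpose_mpow: "transpose (mpow M k) = mpow (transpose M) k"
proof (induction k)
  case (Suc k)
  have "transpose (mpow M (Suc k)) = transpose (mpow M k) ** transpose M"
    by (simp add: matrix_transpose_mul)
  also have "\<dots> = mpow (transpose M) (Suc k)" by (simp only: Suc mpow_Suc')
  finally show ?case .
qed simp

lemma summable_mexp: "summable (\<lambda>k. (1 / fact k) *\<^sub>R mpow (M::real^'n^'n) k)"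
proof -
  have "summable (\<lambda>n. ofE (toE M ^ n /\<^sub>R fact n))"
    by (rule bounded_linear.summable[OF bl_ofE summable_exp_generic])
  thus ?thesis by (simp add: ofE_scaleR toE_mpow[symmetric] divide_inverse)
qed

lemma bl_transpose: "bounded_linear (transpose :: real^'n^'m \<Rightarrow> real^'m^'n)"
  unfolding linear_conv_bounded_linear[symmetric]
  by (rule linearI) (simp_all add: transpose_def vec_eq_iff)

lemma transpose_mexp: "transpose (mexp M) = mexp (transpose (M::real^'n^'n))"
  unfolding mexp_def
  by (simp add: bounded_linear.suminf[OF bl_transpose summable_mexp] transpose_scalar transpose_mpow)

lemma mexp_app: "mexp (t *\<^sub>R M) *v x = app (exp (t *\<^sub>R toE M)) x"
  by (simp add: mexp_ofE app_ofE toE_scaleR)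

lemma mexp_deriv_left:
  "((\<lambda>t. mexp (t *\<^sub>R M) *v x) has_vector_derivative (M *v (mexp (t *\<^sub>R M) *v x))) (at t within S)"
  unfolding mexp_app
  using bounded_linear.has_vector_derivative[OF bl_app exp_scaleR_has_vector_derivative_left[where A="toE M" and t=t]]
  by (simp add: has_vector_derivative_at_within)

lemma mexp_deriv_right:
  "((\<lambda>t. mexp (t *\<^sub>R M) *v x) has_vector_derivative (mexp (t *\<^sub>R M) *v (M *v x))) (at t within S)"
  unfolding mexp_app
  using bounded_linear.has_vector_derivative[OF bl_app exp_scaleR_has_vector_derivative_right[where A="toE M" and t=t and T=S]]
  by simp

lemma cont_exp_scaleR: "continuous_on S (\<lambda>t::real. exp (t *\<^sub>R (X::'a::{real_normed_algebra_1,banach})))"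
  by (rule continuous_on_vector_derivative, rule exp_scaleR_has_vector_derivative_right)

lemma cont_prod3:
  "continuous_on S (\<lambda>t. mexp ((f t) *\<^sub>R M) ** C ** mexp ((f t) *\<^sub>R N))"
  if "continuous_on S f" for f :: "real \<Rightarrow> real" and M C N :: "real^'n^'n"
proof -
  have e: "mexp ((f t) *\<^sub>R M) ** C ** mexp ((f t) *\<^sub>R N) =
     ofE (exp (f t *\<^sub>R toE M) * toE C * exp (f t *\<^sub>R toE N))" for t
    by (simp add: ofE_mult mexp_ofE toE_scaleR)
  have c1: "continuous_on S (\<lambda>t. exp (f t *\<^sub>R toE M))"
    using continuous_on_compose[OF that cont_exp_scaleR[of "f ` S" "toE M"]] by (simp add: o_def)
  have c2: "continuous_on S (\<lambda>t. exp (f t *\<^sub>R toE N))"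
    using continuous_on_compose[OF that cont_exp_scaleR[of "f ` S" "toE N"]] by (simp add: o_def)
  show ?thesis unfolding e
    by (intro bounded_linear.continuous_on[OF bl_ofE] continuous_intros c1 c2)
qed

lemma inner_mv: "(M *v x) \<bullet> y = x \<bullet> (transpose M *v (y::real^'n))"
  by (metis dot_lmul_matrix inner_commute transpose_matrix_vector transpose_transpose vector_transpose_matrix)

lemma invertible_matrix_inv:
  assumes "invertible (W::real^'n^'n)"
  shows "W ** matrix_inv W = mat 1" "matrix_inv W ** W = mat 1"
  using someI_ex[OF assms[unfolded invertible_def]] unfolding matrix_inv_def by auto

definition symm :: "real^'n^'n \<Rightarrow> bool" where
  "symm W \<longleftrightarrow> (\<forall>x y. (W *v x) \<bullet> y = x \<bullet> (W *v y))"

lemma quad_disc: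
  fixes a b c :: real
  assumes "\<And>r. 0 \<le> c + 2*r*b + r^2*a"
  shows "b^2 \<le> a*c"
proof (cases "a = 0")
  case True
  show ?thesis
  proof (cases "b = 0")
    case False
    have "0 \<le> c + 2*(-(c+1)/(2*b))*b" using assms[of "-(c+1)/(2*b)"] True by simp
    also have "\<dots> = -1" using False by (simp add: field_simps)
    finally show ?thesis by simp
  qed (use True in simp)
next
  case False
  have a0: "a > 0"
  proof (rule ccontr)
    assume "\<not> a > 0" hence an: "a < 0" using False by simp
    define r where "r = 1 + \<bar>c\<bar> / (- a)"
    have "\<bar>c\<bar> / (- a) \<ge> 0" using an by (intro divide_nonneg_pos) auto
    hence r1: "r \<ge> 1" unfolding r_def by simp
    have "r * r \<ge> r * 1" using r1 by (intro mult_left_mono) auto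
    hence "r^2 * a \<le> r * a" using an by (intro mult_right_mono_neg) (auto simp: power2_eq_square)
    also have "r * a = a - \<bar>c\<bar>" using an by (simp add: r_def field_simps)
    finally have "c + r^2 * a < 0" using an by linarith
    moreover have "0 \<le> c + 2*r*b + r^2*a" "0 \<le> c + 2*(-r)*b + (-r)^2*a" by (rule assms)+
    ultimately show False by simp
  qed
  have "0 \<le> c + 2*(-b/a)*b + (-b/a)^2*a" by (rule assms)
  also have "\<dots> = c - b^2/a" using a0 by (simp add: field_simps power2_eq_square)
  finally have "b^2/a \<le> c" by simp
  thus ?thesis using a0 by (simp add: field_simps mult.commute)
qed

lemma symm_diff: "symm S \<Longrightarrow> symm T \<Longrightarrow> symm (S - T)"
  by (simp add: symm_def matrix_vector_mult_diff_rdistrib inner_diff_left inner_diff_right)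
lemma symm_scaled_id: "symm (c *\<^sub>R mat 1)"
  by (simp add: symm_def scaleR_matrix_vector_assoc[symmetric] matrix_vector_mul_lid)

lemma psd_cs:
  assumes S: "symm S" and psd: "\<And>x. 0 \<le> (S *v x) \<bullet> x"
  shows "((S *v z) \<bullet> w)^2 \<le> ((S *v w) \<bullet> w) * ((S *v z) \<bullet> z)"
proof (rule quad_disc)
  fix r :: real
  have "0 \<le> (S *v (z + r *\<^sub>R w)) \<bullet> (z + r *\<^sub>R w)" by (rule psd)
  also have "\<dots> = (S *v z) \<bullet> z + 2*r*((S *v z) \<bullet> w) + r^2*((S *v w) \<bullet> w)"
    using S[unfolded symm_def, rule_format, of w z]
    by (simp add: matrix_vector_right_distrib matrix_vector_mult_scaleR inner_add_left inner_add_right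
        power2_eq_square algebra_simps inner_commute)
  finally show "0 \<le> (S *v z) \<bullet> z + 2*r*((S *v z) \<bullet> w) + r^2*((S *v w) \<bullet> w)" .
qed

lemma psd_null:
  assumes S: "symm S" and psd: "\<And>x. 0 \<le> (S *v x) \<bullet> x" and z: "(S *v z) \<bullet> z = 0"
  shows "S *v z = 0"
proof -
  have "((S *v z) \<bullet> (S *v z))^2 \<le> 0" using psd_cs[OF S psd, of z "S *v z"] z by simp
  thus ?thesis by simp
qed

lemma rayleigh_min:
  assumes W: "symm (W::real^'n^'n)"
  shows "\<exists>m. is_eigenvalue W m \<and> (\<forall>z. m * (z \<bullet> z) \<le> (W *v z) \<bullet> z)"
proof -
  let ?q = "\<lambda>z. (W *v z) \<bullet> z"
  have cq: "continuous_on (sphere 0 1) ?q"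
    by (intro continuous_intros bounded_linear.continuous_on[OF bl_mv])
  have ne: "sphere (0::real^'n) 1 \<noteq> {}" by simp
  obtain z0 where z0: "z0 \<in> sphere 0 1" and mn: "\<And>y. y \<in> sphere 0 1 \<Longrightarrow> ?q z0 \<le> ?q y"
    using continuous_attains_inf[OF compact_sphere ne cq] by blast
  define m where "m = ?q z0"
  have lo: "m * (z \<bullet> z) \<le> ?q z" for z
  proof (cases "z = 0")
    case False
    hence nz: "norm z > 0" by simp
    have "m \<le> ?q (z /\<^sub>R norm z)" unfolding m_def by (rule mn) (use nz in simp)
    also have "\<dots> = ?q z / (norm z)^2"
      by (simp add: matrix_vector_mult_scaleR power2_eq_square field_simps)
    finally have "m * (norm z)^2 \<le> ?q z" using nz by (simp add: field_simps)
    thus ?thesis by (simp add: power2_norm_eq_inner)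
  qed simp
  let ?S = "W - m *\<^sub>R mat 1"
  have Sv: "?S *v x = W *v x - m *\<^sub>R x" for x
    by (simp add: matrix_vector_mult_diff_rdistrib scaleR_matrix_vector_assoc[symmetric])
  have psd: "0 \<le> (?S *v x) \<bullet> x" for x using lo[of x] by (simp add: Sv inner_diff_left)
  have "(?S *v z0) \<bullet> z0 = ?q z0 - m * (z0 \<bullet> z0)" unfolding Sv by (simp add: inner_diff_left)
  also have "z0 \<bullet> z0 = 1" using z0 by (simp add: power2_norm_eq_inner[symmetric])
  finally have "(?S *v z0) \<bullet> z0 = 0" by (simp add: m_def)
  hence "?S *v z0 = 0" by (rule psd_null[OF symm_diff[OF W symm_scaled_id] psd])
  hence "W *v z0 = m *\<^sub>R z0" by (simp add: Sv)
  moreover have "z0 \<noteq> 0" using z0 by auto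
  ultimately show ?thesis using lo unfolding is_eigenvalue_def by blast
qed

lemma mv_neg: "(- W) *v x = - (W *v (x::real^'n))"
  by (metis diff_0 matrix_vector_mult_diff_rdistrib matrix_vector_mult_0 vector_space_over_itself.scale_zero_left
      matrix_vector_mult_0_right) 

lemma symm_neg: "symm W \<Longrightarrow> symm (- W)"
  by (simp add: symm_def mv_neg)

lemma rayleigh_max:
  assumes W: "symm (W::real^'n^'n)"
  shows "\<exists>M. is_eigenvalue W M \<and> (\<forall>z. (W *v z) \<bullet> z \<le> M * (z \<bullet> z))"
proof -
  obtain m where m: "is_eigenvalue (- W) m" "\<forall>z. m * (z \<bullet> z) \<le> ((- W) *v z) \<bullet> z"
    using rayleigh_min[OF symm_neg[OF W]] by blast
  have "is_eigenvalue W (-m)" using m(1) unfolding is_eigenvalue_def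
    by (metis mv_neg minus_minus scaleR_minus_left)
  moreover have "\<forall>z. (W *v z) \<bullet> z \<le> (-m) * (z \<bullet> z)"
  proof
    fix z show "(W *v z) \<bullet> z \<le> (-m) * (z \<bullet> z)" using m(2)[rule_format, of z] by (simp add: mv_neg)
  qed
  ultimately show ?thesis by blast
qed

lemma pd_invertible:
  fixes W :: "real^'n^'n"
  assumes c: "c > 0" and lo: "\<And>z. c * (z \<bullet> z) \<le> (W *v z) \<bullet> z"
  shows "invertible W"
proof -
  have "inj ((*v) W)"
  proof (rule injI)
    fix a b assume "W *v a = W *v b"
    hence "W *v (a - b) = 0" by (simp add: matrix_vector_mult_diff_distrib)
    hence "c * ((a - b) \<bullet> (a - b)) \<le> 0" using lo[of "a - b"] by simp
    hence "(a - b) \<bullet> (a - b) \<le> 0" using c by (simp add: mult_le_0_iff)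
    hence "(a - b) \<bullet> (a - b) = 0" by (metis inner_ge_zero order_antisym)
    thus "a = b" by simp
  qed
  thus ?thesis using matrix_left_invertible_injective invertible_left_inverse by blast
qed

lemma lyap:
  fixes M W :: "real^'n^'n" and x :: "real^'n"
  assumes W: "symm W" and c: "c > 0"
    and lo: "\<And>z. c * (z \<bullet> z) \<le> (W *v z) \<bullet> z"
    and hi: "\<And>z. (W *v z) \<bullet> z \<le> D * (z \<bullet> z)"
    and dec: "\<And>z. ((M ** W) *v z) \<bullet> z \<le> - \<alpha> * ((W *v z) \<bullet> z)"
    and t: "t \<ge> 0"
  shows "norm (mexp (t *\<^sub>R M) *v x) \<le> sqrt (D / c) * exp (- \<alpha> * t) * norm x"
proof -
  have inv: "invertible W" by (rule pd_invertible[OF c lo])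
  define P where "P = matrix_inv W"
  have WP: "W *v (P *v v) = v" for v
    using invertible_matrix_inv(1)[OF inv] by (simp add: P_def matrix_vector_mul_assoc)
  have Wsym: "(W *v a) \<bullet> b = a \<bullet> (W *v b)" for a b using W by (simp add: symm_def)
  have Psym: "(P *v a) \<bullet> b = a \<bullet> (P *v b)" for a b
  proof -
    have "(P *v a) \<bullet> b = (P *v a) \<bullet> (W *v (P *v b))" by (simp add: WP)
    also have "\<dots> = (W *v (P *v a)) \<bullet> (P *v b)" by (simp add: Wsym)
    finally show ?thesis by (simp add: WP)
  qed
  have D: "D \<ge> c"
  proof -
    define e :: "real^'n" where "e = axis undefined 1"
    have e: "e \<noteq> 0" unfolding e_def by (metis norm_axis_1 norm_zero zero_neq_one)
    have "c * (e \<bullet> e) \<le> D * (e \<bullet> e)" using lo[of e] hi[of e] by linarith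
    thus ?thesis using e by simp
  qed
  have qnn: "0 \<le> (W *v z) \<bullet> z" for z
    using lo[of z] c by (meson inner_ge_zero mult_nonneg_nonneg less_imp_le order_trans)
  have up: "v \<bullet> (P *v v) \<le> (v \<bullet> v) / c" for v
  proof -
    define z where "z = P *v v"
    have vz: "v = W *v z" using WP z_def by simp
    have "c * (z \<bullet> z) \<le> v \<bullet> z" using lo[of z] vz by simp
    also have "\<dots> \<le> norm v * norm z" by (rule norm_cauchy_schwarz)
    finally have "(c * norm z) * norm z \<le> norm v * norm z"
      by (simp add: power2_norm_eq_inner[symmetric] power2_eq_square mult.assoc)
    hence nz: "c * norm z \<le> norm v"
    proof (cases "norm z = 0")
      case False hence "norm z > 0" by simp
      with \<open>(c * norm z) * norm z \<le> norm v * norm z\<close> show ?thesis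
        by (rule mult_right_le_imp_le)
    qed simp
    have nz': "norm z \<le> norm v / c" using nz c by (simp add: pos_le_divide_eq mult.commute)
    have "v \<bullet> z \<le> norm v * norm z" by (rule norm_cauchy_schwarz)
    also have "\<dots> \<le> norm v * (norm v / c)" using nz' by (intro mult_left_mono) auto
    also have "\<dots> = (v \<bullet> v) / c" by (simp add: power2_norm_eq_inner[symmetric] power2_eq_square)
    finally show ?thesis by (simp add: z_def)
  qed
  have low: "v \<bullet> v \<le> D * (v \<bullet> (P *v v))" for v
  proof -
    define z where "z = P *v v"
    have vz: "v = W *v z" using WP z_def by simp
    have "((W *v z) \<bullet> v)^2 \<le> ((W *v v) \<bullet> v) * ((W *v z) \<bullet> z)"
      by (rule psd_cs[OF W qnn])
    also have "\<dots> \<le> (D * (v \<bullet> v)) * ((W *v z) \<bullet> z)"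
      by (intro mult_right_mono hi qnn)
    finally have "(v \<bullet> v) * (v \<bullet> v) \<le> (v \<bullet> v) * (D * ((W *v z) \<bullet> z))"
      using vz by (simp add: power2_eq_square algebra_simps)
    hence "v \<bullet> v \<le> D * ((W *v z) \<bullet> z)"
    proof (cases "v \<bullet> v = 0")
      case True thus ?thesis using qnn[of z] D c by simp
    next
      case False hence "v \<bullet> v > 0" by (simp add: order_le_neq_trans)
      thus ?thesis using \<open>(v \<bullet> v) * (v \<bullet> v) \<le> (v \<bullet> v) * (D * ((W *v z) \<bullet> z))\<close>
        by (meson mult_left_le_imp_le less_imp_le)
    qed
    also have "(W *v z) \<bullet> z = v \<bullet> (P *v v)" unfolding z_def by (simp only: WP)
    finally show ?thesis .
  qed
  define y where "y = (\<lambda>u. mexp (u *\<^sub>R M) *v x)"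
  define f where "f = (\<lambda>u. y u \<bullet> (P *v y u))"
  have dy: "(y has_vector_derivative (M *v y u)) (at u)" for u
    unfolding y_def by (rule mexp_deriv_left)
  have df: "(f has_real_derivative 2 * ((M *v y u) \<bullet> (P *v y u))) (at u)" for u
  proof -
    have "((\<lambda>u. y u \<bullet> (P *v y u)) has_vector_derivative
        (y u \<bullet> (P *v (M *v y u)) + (M *v y u) \<bullet> (P *v y u))) (at u)"
      by (rule bounded_bilinear.has_vector_derivative[OF bounded_bilinear_inner dy
            bounded_linear.has_vector_derivative[OF bl_mv dy]])
    moreover have "y u \<bullet> (P *v (M *v y u)) = (M *v y u) \<bullet> (P *v y u)"
      using Psym[of "y u" "M *v y u"] inner_commute[of "P *v y u" "M *v y u"] by simp
    ultimately show ?thesis unfolding f_def has_real_derivative_iff_has_vector_derivative by simp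
  qed
  have fdec: "(M *v y u) \<bullet> (P *v y u) \<le> - \<alpha> * f u" for u
  proof -
    define z where "z = P *v y u"
    have vz: "y u = W *v z" using WP z_def by simp
    have "(M *v y u) \<bullet> (P *v y u) = ((M ** W) *v z) \<bullet> z"
      by (simp only: z_def[symmetric]) (simp only: vz matrix_vector_mul_assoc)
    also have "\<dots> \<le> - \<alpha> * ((W *v z) \<bullet> z)" by (rule dec)
    finally show ?thesis by (simp add: f_def z_def[symmetric] vz[symmetric])
  qed
  define g where "g = (\<lambda>u. exp (2 * \<alpha> * u) * f u)"
  have dg: "(g has_real_derivative (exp (2*\<alpha>*u) * (2*\<alpha>) * f u + exp (2*\<alpha>*u) * (2 * ((M *v y u) \<bullet> (P *v y u))))) (at u)" for u
  proof -
    have e: "((\<lambda>u. exp (2*\<alpha>*u)) has_real_derivative (exp (2*\<alpha>*u) * (2*\<alpha>))) (at u)"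
      by (rule DERIV_fun_exp) (rule DERIV_cmult_Id)
    show ?thesis unfolding g_def using DERIV_mult[OF e df[of u]] by (simp add: mult.commute)
  qed
  have "g t \<le> g 0"
  proof (rule DERIV_nonpos_imp_nonincreasing[OF t])
    fix u
    have "exp (2*\<alpha>*u) * (2 * ((M *v y u) \<bullet> (P *v y u))) \<le> exp (2*\<alpha>*u) * (2 * (- \<alpha> * f u))"
      using fdec[of u] by (intro mult_left_mono) auto
    show "\<exists>d. (g has_real_derivative d) (at u) \<and> d \<le> 0"
    proof (intro exI conjI)
      show "(g has_real_derivative (exp (2*\<alpha>*u) * (2*\<alpha>) * f u + exp (2*\<alpha>*u) * (2 * ((M *v y u) \<bullet> (P *v y u))))) (at u)"
        by (rule dg)
      have "exp (2*\<alpha>*u) * (2 * (- \<alpha> * f u)) = - (exp (2*\<alpha>*u) * (2*\<alpha>) * f u)" by (simp add: algebra_simps)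
      thus "exp (2*\<alpha>*u) * (2*\<alpha>) * f u + exp (2*\<alpha>*u) * (2 * ((M *v y u) \<bullet> (P *v y u))) \<le> 0"
        using \<open>exp (2*\<alpha>*u) * (2 * ((M *v y u) \<bullet> (P *v y u))) \<le> exp (2*\<alpha>*u) * (2 * (- \<alpha> * f u))\<close> by linarith
    qed
  qed
  hence gt: "exp (2 * \<alpha> * t) * f t \<le> f 0" unfolding g_def by simp
  have ft: "f t \<le> exp (- 2 * \<alpha> * t) * f 0"
  proof -
    have e1: "exp (- 2 * \<alpha> * t) * exp (2 * \<alpha> * t) = 1"
      by (simp add: exp_add[symmetric])
    have "f t = (exp (- 2 * \<alpha> * t) * exp (2 * \<alpha> * t)) * f t" by (simp only: e1 mult_1)
    also have "\<dots> = exp (- 2 * \<alpha> * t) * (exp (2 * \<alpha> * t) * f t)" by (simp only: mult.assoc)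
    also have "\<dots> \<le> exp (- 2 * \<alpha> * t) * f 0"
      using gt by (intro mult_left_mono) auto
    finally show ?thesis .
  qed
  have y0: "y 0 = x" by (simp add: y_def mexp_zero)
  have "norm (y t) ^ 2 \<le> D * f t" using low[of "y t"] by (simp add: f_def power2_norm_eq_inner)
  also have "\<dots> \<le> D * (exp (- 2 * \<alpha> * t) * f 0)" using ft D c by (intro mult_left_mono) auto
  also have "\<dots> \<le> D * (exp (- 2 * \<alpha> * t) * ((x \<bullet> x) / c))"
  proof -
    have "f 0 = x \<bullet> (P *v x)" by (simp add: f_def y0)
    hence "f 0 \<le> (x \<bullet> x) / c" using up[of x] by simp
    thus ?thesis using D c by (intro mult_left_mono) auto
  qed
  also have "\<dots> = (sqrt (D / c) * exp (- \<alpha> * t) * norm x) ^ 2"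
  proof -
    have "(sqrt (D / c))^2 = D / c" using D c by simp
    moreover have "(exp (- \<alpha> * t))^2 = exp (- 2 * \<alpha> * t)"
    proof -
      have "- 2 * \<alpha> * t = - \<alpha> * t + - \<alpha> * t" by simp
      thus ?thesis by (simp only: exp_add power2_eq_square)
    qed
    moreover have "(norm x)^2 = x \<bullet> x" by (simp add: power2_norm_eq_inner)
    ultimately show ?thesis by (simp add: power_mult_distrib)
  qed
  finally show ?thesis unfolding y_def
    by (rule power2_le_imp_le) (use D c in auto)
qed

definition uu :: "real^'n^'n \<Rightarrow> real^'m^'n \<Rightarrow> real^'n \<Rightarrow> real \<Rightarrow> real^'m" where
  "uu A B z t = transpose B *v (mexp ((- t / 2) *\<^sub>R transpose A) *v z)"

definition integrand :: "real^'n^'n \<Rightarrow> real^'m^'n \<Rightarrow> real \<Rightarrow> real \<Rightarrow> real^'n^'n" where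
  "integrand A B \<alpha> t = exp (- \<alpha> * t) *\<^sub>R
     (mexp ((- t / 2) *\<^sub>R A) ** B ** transpose B ** mexp ((- t / 2) *\<^sub>R transpose A))"

lemma gramian_integrand: "gramian A B \<alpha> ts = integral {0..ts} (integrand A B \<alpha>)"
  unfolding gramian_def integrand_def ..

lemma integrand_quad:
  "(integrand A B \<alpha> t *v z) \<bullet> w = exp (- \<alpha> * t) * (uu A B z t \<bullet> uu A B w t)"
proof -
  let ?E1 = "mexp ((- t / 2) *\<^sub>R A)" and ?E2 = "mexp ((- t / 2) *\<^sub>R transpose A)"
  have tr: "transpose ?E1 = ?E2" by (simp only: transpose_mexp transpose_scalar)
  have "(?E1 ** B ** transpose B ** ?E2) *v z = ?E1 *v (B *v (transpose B *v (?E2 *v z)))"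
    by (simp only: matrix_vector_mul_assoc matrix_mul_assoc)
  hence "((?E1 ** B ** transpose B ** ?E2) *v z) \<bullet> w = (B *v (transpose B *v (?E2 *v z))) \<bullet> (transpose ?E1 *v w)"
    by (simp only: inner_mv[of ?E1])
  also have "\<dots> = (transpose B *v (?E2 *v z)) \<bullet> (transpose B *v (?E2 *v w))"
    by (simp only: inner_mv[of B] tr)
  finally have "((?E1 ** B ** transpose B ** ?E2) *v z) \<bullet> w = (transpose B *v (?E2 *v z)) \<bullet> (transpose B *v (?E2 *v w))" .
  thus ?thesis unfolding integrand_def uu_def
    by (simp add: scaleR_matrix_vector_assoc[symmetric])
qed

lemma integrand_cont: "continuous_on S (integrand A B \<alpha>)"
proof -
  have e: "integrand A B \<alpha> t = exp (- \<alpha> * t) *\<^sub>R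
     (mexp ((- t / 2) *\<^sub>R A) ** (B ** transpose B) ** mexp ((- t / 2) *\<^sub>R transpose A))" for t
    unfolding integrand_def by (simp add: matrix_mul_assoc)
  have "continuous_on S (\<lambda>t::real. - t / 2)" by (intro continuous_intros) auto
  from cont_prod3[OF this, of A "B ** transpose B" "transpose A"]
  show ?thesis unfolding e by (intro continuous_intros)
qed

lemma integrand_integrable: "integrand A B \<alpha> integrable_on {a..b}"
  by (rule integrable_continuous_real, rule integrand_cont)

lemma bl_quadform: "bounded_linear (\<lambda>X::real^'n^'n. (X *v z) \<bullet> w)"
  unfolding linear_conv_bounded_linear[symmetric]
  by (rule linearI) (simp_all add: matrix_vector_mult_add_rdistrib inner_add_left
      scaleR_matrix_vector_assoc[symmetric])

lemma gram_quad_has: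
  "((\<lambda>t. exp (- \<alpha> * t) * (uu A B z t \<bullet> uu A B w t)) has_integral ((gramian A B \<alpha> ts *v z) \<bullet> w)) {0..ts}"
proof -
  have "((\<lambda>X. (X *v z) \<bullet> w) \<circ> integrand A B \<alpha>) integrable_on {0..ts}"
    by (rule integrable_linear[OF integrand_integrable bl_quadform])
  hence "(((\<lambda>X. (X *v z) \<bullet> w) \<circ> integrand A B \<alpha>) has_integral integral {0..ts} ((\<lambda>X. (X *v z) \<bullet> w) \<circ> integrand A B \<alpha>)) {0..ts}"
    by (rule integrable_integral)
  moreover have "integral {0..ts} ((\<lambda>X. (X *v z) \<bullet> w) \<circ> integrand A B \<alpha>) = (gramian A B \<alpha> ts *v z) \<bullet> w"
    unfolding gramian_integrand by (rule integral_linear[OF integrand_integrable bl_quadform])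
  ultimately have "(((\<lambda>X. (X *v z) \<bullet> w) \<circ> integrand A B \<alpha>) has_integral ((gramian A B \<alpha> ts *v z) \<bullet> w)) {0..ts}"
    by simp
  moreover have "((\<lambda>X. (X *v z) \<bullet> w) \<circ> integrand A B \<alpha>) = (\<lambda>t. exp (- \<alpha> * t) * (uu A B z t \<bullet> uu A B w t))"
    by (rule ext) (simp only: o_apply integrand_quad)
  ultimately show ?thesis by simp
qed

lemma gram_quad: "(gramian A B \<alpha> ts *v z) \<bullet> w = integral {0..ts} (\<lambda>t. exp (- \<alpha> * t) * (uu A B z t \<bullet> uu A B w t))"
  using gram_quad_has[of \<alpha> A B z w ts] by (rule integral_unique[symmetric])

lemma gram_symm: "symm (gramian A B \<alpha> ts)"
  unfolding symm_def
proof (intro allI)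
  fix x y
  have "(gramian A B \<alpha> ts *v x) \<bullet> y = (gramian A B \<alpha> ts *v y) \<bullet> x"
    unfolding gram_quad by (simp add: inner_commute)
  thus "(gramian A B \<alpha> ts *v x) \<bullet> y = x \<bullet> (gramian A B \<alpha> ts *v y)" by (simp add: inner_commute)
qed

lemma bl_mv_any: "bounded_linear (\<lambda>x. (M::real^'a^'b) *v x)"
  by (simp add: linear_conv_bounded_linear)

lemma bl_mv_left: "bounded_linear (\<lambda>X::real^'a^'b. X *v x)"
  unfolding linear_conv_bounded_linear[symmetric]
  by (rule linearI) (simp_all add: matrix_vector_mult_add_rdistrib scaleR_matrix_vector_assoc[symmetric])

lemma uu_cont: "continuous_on S (uu A B z)"
proof -
  have f: "continuous_on S (\<lambda>t::real. - t / 2)" by (intro continuous_intros) auto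
  have "continuous_on S (\<lambda>t. exp ((- t / 2) *\<^sub>R toE (transpose A)))"
    using continuous_on_compose[OF f cont_exp_scaleR[of "(\<lambda>t. - t/2) ` S" "toE (transpose A)"]]
    by (simp add: o_def)
  hence "continuous_on S (\<lambda>t. ofE (exp ((- t / 2) *\<^sub>R toE (transpose A))))"
    by (rule bounded_linear.continuous_on[OF bl_ofE])
  hence "continuous_on S (\<lambda>t. mexp ((- t / 2) *\<^sub>R transpose A))"
    by (simp only: mexp_ofE toE_scaleR)
  thus ?thesis unfolding uu_def
    by (intro bounded_linear.continuous_on[OF bl_mv_any] bounded_linear.continuous_on[OF bl_mv_left])
qed

abbreviation qf :: "real^'n^'n \<Rightarrow> real^'n \<Rightarrow> real" where "qf W z \<equiv> (W *v z) \<bullet> z"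

lemma gram_bounds:
  assumes a: "\<alpha> \<ge> 0"
  shows "exp (- \<alpha> * ts) * qf (gramian A B 0 ts) z \<le> qf (gramian A B \<alpha> ts) z"
    and "qf (gramian A B \<alpha> ts) z \<le> qf (gramian A B 0 ts) z"
proof -
  have h0: "((\<lambda>t. exp (- 0 * t) * (uu A B z t \<bullet> uu A B z t)) has_integral qf (gramian A B 0 ts) z) {0..ts}"
    by (rule gram_quad_has)
  have ha: "((\<lambda>t. exp (- \<alpha> * t) * (uu A B z t \<bullet> uu A B z t)) has_integral qf (gramian A B \<alpha> ts) z) {0..ts}"
    by (rule gram_quad_has)
  show "exp (- \<alpha> * ts) * qf (gramian A B 0 ts) z \<le> qf (gramian A B \<alpha> ts) z"
  proof (rule has_integral_le[OF has_integral_mult_right[OF h0] ha])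
    fix t assume t: "t \<in> {0..ts}"
    have "exp (- \<alpha> * ts) \<le> exp (- \<alpha> * t)" using t a by (simp add: mult_left_mono)
    thus "exp (- \<alpha> * ts) * (exp (- 0 * t) * (uu A B z t \<bullet> uu A B z t)) \<le> exp (- \<alpha> * t) * (uu A B z t \<bullet> uu A B z t)"
      by (simp add: mult_right_mono)
  qed
  show "qf (gramian A B \<alpha> ts) z \<le> qf (gramian A B 0 ts) z"
  proof (rule has_integral_le[OF ha h0])
    fix t assume t: "t \<in> {0..ts}"
    have "exp (- \<alpha> * t) \<le> 1" using t a by simp
    thus "exp (- \<alpha> * t) * (uu A B z t \<bullet> uu A B z t) \<le> exp (- 0 * t) * (uu A B z t \<bullet> uu A B z t)"
      using mult_right_mono[of "exp (- \<alpha> * t)" 1 "uu A B z t \<bullet> uu A B z t"] by simp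
  qed
qed

lemma half_deriv: "((\<lambda>t::real. - t / 2) has_vector_derivative (- 1 / 2)) (at t within S)"
proof -
  have "((\<lambda>t::real. - t / 2) has_real_derivative (- 1 / 2)) (at t within S)"
    by (auto intro!: derivative_eq_intros)
  thus ?thesis by (simp add: has_real_derivative_iff_has_vector_derivative)
qed

lemma uu_deriv:
  "(uu A B z has_vector_derivative ((- 1 / 2) *\<^sub>R uu A B (transpose A *v z) t)) (at t within S)"
proof -
  let ?g = "\<lambda>r. mexp (r *\<^sub>R transpose A) *v z"
  have "((?g \<circ> (\<lambda>t. - t / 2)) has_vector_derivative ((- 1 / 2) *\<^sub>R (mexp ((- t / 2) *\<^sub>R transpose A) *v (transpose A *v z)))) (at t within S)"
    by (rule vector_diff_chain_within[OF half_deriv mexp_deriv_right])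
  hence "((\<lambda>t. transpose B *v (?g \<circ> (\<lambda>t. - t / 2)) t) has_vector_derivative
      (transpose B *v ((- 1 / 2) *\<^sub>R (mexp ((- t / 2) *\<^sub>R transpose A) *v (transpose A *v z))))) (at t within S)"
    by (rule bounded_linear.has_vector_derivative[OF bl_mv_any])
  moreover have "(\<lambda>t. transpose B *v (?g \<circ> (\<lambda>t. - t / 2)) t) = uu A B z"
    by (rule ext) (simp only: uu_def o_apply)
  moreover have "transpose B *v ((- 1 / 2) *\<^sub>R (mexp ((- t / 2) *\<^sub>R transpose A) *v (transpose A *v z)))
     = (- 1 / 2) *\<^sub>R uu A B (transpose A *v z) t"
    by (simp only: uu_def matrix_vector_mult_scaleR)
  ultimately show ?thesis by simp
qed

lemma uu_zero: "uu A B z 0 = transpose B *v z"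
  by (simp add: uu_def mexp_zero)

lemma gram_lyap:
  assumes ts: "ts \<ge> 0"
  shows "(A *v (gramian A B \<alpha> ts *v z)) \<bullet> z \<le> (transpose B *v z) \<bullet> (transpose B *v z) - \<alpha> * qf (gramian A B \<alpha> ts) z"
proof -
  let ?u = "uu A B z" and ?v = "uu A B (transpose A *v z)"
  define \<phi> where "\<phi> = (\<lambda>t. exp (- \<alpha> * t) * (?u t \<bullet> ?u t))"
  define \<psi> where "\<psi> = (\<lambda>t. exp (- \<alpha> * t) * (?u t \<bullet> ?v t))"
  have d\<phi>: "(\<phi> has_vector_derivative (- \<alpha> * \<phi> t - \<psi> t)) (at t within {0..ts})" for t
  proof -
    have du: "(?u has_vector_derivative ((- 1 / 2) *\<^sub>R ?v t)) (at t within {0..ts})" by (rule uu_deriv)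
    have i: "((\<lambda>t. ?u t \<bullet> ?u t) has_vector_derivative (?u t \<bullet> ((- 1 / 2) *\<^sub>R ?v t) + ((- 1 / 2) *\<^sub>R ?v t) \<bullet> ?u t)) (at t within {0..ts})"
      by (rule bounded_bilinear.has_vector_derivative[OF bounded_bilinear_inner du du])
    have e: "((\<lambda>t. exp (- \<alpha> * t)) has_real_derivative (exp (- \<alpha> * t) * (- \<alpha>))) (at t within {0..ts})"
      by (auto intro!: derivative_eq_intros)
    have "(\<phi> has_real_derivative (exp (- \<alpha> * t) * (- \<alpha>) * (?u t \<bullet> ?u t) + exp (- \<alpha> * t) *
          (?u t \<bullet> ((- 1 / 2) *\<^sub>R ?v t) + ((- 1 / 2) *\<^sub>R ?v t) \<bullet> ?u t))) (at t within {0..ts})"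
      unfolding \<phi>_def using DERIV_mult[OF e i[unfolded has_real_derivative_iff_has_vector_derivative[symmetric]]] by (simp add: mult.commute)
    moreover have "exp (- \<alpha> * t) * (- \<alpha>) * (?u t \<bullet> ?u t) + exp (- \<alpha> * t) *
          (?u t \<bullet> ((- 1 / 2) *\<^sub>R ?v t) + ((- 1 / 2) *\<^sub>R ?v t) \<bullet> ?u t) = - \<alpha> * \<phi> t - \<psi> t"
      unfolding \<phi>_def \<psi>_def by (simp add: algebra_simps del: transpose_matrix_vector) (simp add: inner_commute)
    ultimately show ?thesis by (simp add: has_real_derivative_iff_has_vector_derivative)
  qed
  have ftc: "((\<lambda>t. - \<alpha> * \<phi> t - \<psi> t) has_integral (\<phi> ts - \<phi> 0)) {0..ts}"
    by (rule fundamental_theorem_of_calculus[OF ts d\<phi>])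
  have h\<phi>: "(\<phi> has_integral qf (gramian A B \<alpha> ts) z) {0..ts}"
    unfolding \<phi>_def by (rule gram_quad_has)
  have h\<psi>: "(\<psi> has_integral (gramian A B \<alpha> ts *v z) \<bullet> (transpose A *v z)) {0..ts}"
    unfolding \<psi>_def by (rule gram_quad_has)
  have "((\<lambda>t. - \<alpha> * \<phi> t - \<psi> t) has_integral (- \<alpha> * qf (gramian A B \<alpha> ts) z - (gramian A B \<alpha> ts *v z) \<bullet> (transpose A *v z))) {0..ts}"
    by (intro has_integral_diff has_integral_mult_right h\<phi> h\<psi>)
  with ftc have eq: "\<phi> ts - \<phi> 0 = - \<alpha> * qf (gramian A B \<alpha> ts) z - (gramian A B \<alpha> ts *v z) \<bullet> (transpose A *v z)"
    by (rule has_integral_unique)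
  have "\<phi> ts \<ge> 0" unfolding \<phi>_def by simp
  moreover have "\<phi> 0 = (transpose B *v z) \<bullet> (transpose B *v z)" unfolding \<phi>_def by (simp add: uu_zero)
  moreover have "(A *v (gramian A B \<alpha> ts *v z)) \<bullet> z = (gramian A B \<alpha> ts *v z) \<bullet> (transpose A *v z)"
    by (rule inner_mv)
  ultimately show ?thesis using eq by linarith
qed


lemma mpow_Suc_mv: "M *v (mpow M k *v z) = mpow M (Suc k) *v z"
  by (simp add: matrix_vector_mul_assoc)

lemma gram_pos:
  fixes A :: "real^'n^'n" and B :: "real^'m^'n"
  assumes ctrb: "controllable A B" and ts: "ts > 0" and z: "z \<noteq> 0"
  shows "qf (gramian A B 0 ts) z > 0"
proof -
  let ?f = "\<lambda>t. exp (- 0 * t) * (uu A B z t \<bullet> uu A B z t)"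
  have h: "(?f has_integral qf (gramian A B 0 ts) z) {0..ts}" by (rule gram_quad_has)
  have nn: "qf (gramian A B 0 ts) z \<ge> 0"
    by (rule has_integral_nonneg[OF h]) simp
  show ?thesis
  proof (rule ccontr)
    assume "\<not> ?thesis"
    hence q0: "qf (gramian A B 0 ts) z = 0" using nn by simp
    have cf: "continuous_on (cbox 0 ts) ?f"
      by (intro continuous_intros uu_cont)
    have uz: "uu A B z t = 0" if t: "t \<in> {0..ts}" for t
    proof -
      have "?f t = 0"
        by (rule has_integral_0_cbox_imp_0[OF cf _ _ _ ]) (use h q0 ts t in auto)
      thus ?thesis by simp
    qed
    let ?At = "transpose A"
    define v where "v = (\<lambda>k r. transpose B *v (mexp (r *\<^sub>R ?At) *v (mpow ?At k *v z)))"
    have dv: "(v k has_vector_derivative v (Suc k) r) (at r)" for k r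
    proof -
      have "((\<lambda>r. mexp (r *\<^sub>R ?At) *v (mpow ?At k *v z)) has_vector_derivative
          (mexp (r *\<^sub>R ?At) *v (?At *v (mpow ?At k *v z)))) (at r)"
        by (rule mexp_deriv_right)
      from bounded_linear.has_vector_derivative[OF bl_mv_any this, of "transpose B"]
      show ?thesis unfolding v_def by (simp only: mpow_Suc_mv)
    qed
    have cv: "continuous_on S (v k)" for k S
      by (rule continuous_on_vector_derivative, rule has_vector_derivative_at_within, rule dv)
    have v0: "v 0 r = 0" if "r \<in> {- ts / 2 <..< 0}" for r
    proof -
      have "v 0 r = uu A B z (- 2 * r)" by (simp add: v_def uu_def)
      also have "\<dots> = 0" using that by (intro uz) auto
      finally show ?thesis .
    qed
    have vk: "v k r = 0" if "r \<in> {- ts / 2 <..< 0}" for k r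
      using that
    proof (induction k arbitrary: r)
      case 0 thus ?case by (rule v0)
    next
      case (Suc k)
      have "((\<lambda>r. 0) has_vector_derivative 0) (at r)" by (rule has_vector_derivative_const)
      hence "(v k has_vector_derivative 0) (at r)"
        by (rule has_vector_derivative_transform_within_open[of _ _ _ "{- ts / 2 <..< 0}"])
           (use Suc in auto)
      thus ?case using dv[of k r] vector_derivative_unique_at by metis
    qed
    have vk0: "v k 0 = 0" for k
    proof (rule continuous_constant_on_closure[of "{- ts / 2 <..< 0}"])
      show "continuous_on (closure {- ts / 2 <..< 0}) (v k)" by (rule cv)
      show "\<And>r. r \<in> {- ts / 2 <..< 0} \<Longrightarrow> v k r = 0" by (rule vk)
      show "0 \<in> closure {- ts / 2 <..< (0::real)}" using ts by simp
    qed
    have bk: "transpose B *v (mpow ?At k *v z) = 0" for k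
      using vk0[of k] by (simp add: v_def mexp_zero)
    have orth: "orthogonal z y" if yin: "y \<in> {(mpow A k ** B) *v w | k w. k < CARD('n)}" for y
    proof -
      obtain k w where y: "y = (mpow A k ** B) *v w" using yin by blast
      have "y \<bullet> z = w \<bullet> (transpose (mpow A k ** B) *v z)" unfolding y by (rule inner_mv)
      also have "transpose (mpow A k ** B) *v z = transpose B *v (mpow ?At k *v z)"
        by (simp only: matrix_transpose_mul transpose_mpow matrix_vector_mul_assoc)
      finally show ?thesis using bk[of k] by (simp add: orthogonal_def inner_commute)
    qed
    have "orthogonal z z"
      by (rule orthogonal_to_span[OF _ orth]) (use ctrb[unfolded controllable_def] in auto)
    thus False using z by (simp add: orthogonal_def)
  qed
qed

lemma norm_sq_vec: "(norm (x::real^'a))^2 = (\<Sum>i\<in>UNIV. (x$i)^2)"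
  by (simp add: norm_vec_def L2_set_def sum_nonneg)

lemma sum_pair: "(\<Sum>c\<in>(UNIV::('a::finite \<times> 'b::finite) set). g c) = (\<Sum>i\<in>UNIV. \<Sum>l\<in>UNIV. g (i,l))"
  unfolding UNIV_Times_UNIV[symmetric] sum.cartesian_product by simp

lemma norm_sq_pair: "(norm (x::real^('a::finite \<times> 'b::finite)))^2 = (\<Sum>i\<in>UNIV. \<Sum>l\<in>UNIV. (x$(i,l))^2)"
  unfolding norm_sq_vec UNIV_Times_UNIV[symmetric] sum.cartesian_product by simp

locale orthon =
  fixes xi :: "nat \<Rightarrow> real^'N::finite" and S :: "nat set"
  assumes S: "S \<subseteq> {..<CARD('N)}"
    and on: "\<And>k k'. k \<in> S \<Longrightarrow> k' \<in> S \<Longrightarrow> xi k \<bullet> xi k' = (if k = k' then 1 else 0)"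
begin

lemma finS: "finite S" using S finite_subset by blast

lemma norm_comb: "(norm (\<Sum>k\<in>S. a k *\<^sub>R xi k))^2 = (\<Sum>k\<in>S. (a k)^2)"
proof -
  have "(norm (\<Sum>k\<in>S. a k *\<^sub>R xi k))^2 = (\<Sum>k\<in>S. a k *\<^sub>R xi k) \<bullet> (\<Sum>k\<in>S. a k *\<^sub>R xi k)"
    by (simp add: power2_norm_eq_inner)
  also have "\<dots> = (\<Sum>k\<in>S. \<Sum>k'\<in>S. a k * a k' * (xi k \<bullet> xi k'))"
    by (simp add: inner_sum_left inner_sum_right algebra_simps sum_distrib_left inner_commute)
  also have "\<dots> = (\<Sum>k\<in>S. \<Sum>k'\<in>S. if k = k' then a k * a k' else 0)"
    by (intro sum.cong refl) (simp add: on)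
  also have "\<dots> = (\<Sum>k\<in>S. (a k)^2)"
    by (simp add: finS power2_eq_square)
  finally show ?thesis .
qed

lemma bessel: "(\<Sum>k\<in>S. (xi k \<bullet> v)^2) \<le> (norm v)^2"
proof -
  let ?p = "\<Sum>k\<in>S. (xi k \<bullet> v) *\<^sub>R xi k"
  have pv: "?p \<bullet> v = (\<Sum>k\<in>S. (xi k \<bullet> v)^2)"
    by (simp add: inner_sum_left power2_eq_square)
  have pp: "?p \<bullet> ?p = (\<Sum>k\<in>S. (xi k \<bullet> v)^2)"
    using norm_comb[of "\<lambda>k. xi k \<bullet> v"] by (simp add: power2_norm_eq_inner)
  have "0 \<le> (v - ?p) \<bullet> (v - ?p)" by simp
  also have "\<dots> = v \<bullet> v - 2 * (?p \<bullet> v) + ?p \<bullet> ?p"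
    by (simp add: inner_diff_left inner_diff_right inner_commute)
  finally show ?thesis using pv pp by (simp add: power2_norm_eq_inner)
qed

end

lemma phi_bound:
  fixes xi :: "nat \<Rightarrow> real^'N::finite" and E :: "nat \<Rightarrow> real^'n^'n" and x :: "real^('N \<times> 'n)"
  assumes on: "orthon xi S"
    and bound: "\<And>k y. k \<in> S \<Longrightarrow> norm (E k *v y) \<le> L * norm y" and L: "L \<ge> 0"
  shows "norm ((\<chi> r c. \<Sum>k\<in>S. xi k $ fst r * xi k $ fst c * E k $ snd r $ snd c) *v x) \<le> L * norm x"
proof -
  interpret orthon xi S by (rule on)
  define col where "col = (\<lambda>l. \<chi> i. x $ (i, l))"
  define cc where "cc = (\<lambda>k. \<chi> l. xi k \<bullet> col l)"
  define d where "d = (\<lambda>k. E k *v cc k)"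
  let ?P = "(\<chi> r c. \<Sum>k\<in>S. xi k $ fst r * xi k $ fst c * E k $ snd r $ snd c) :: real^('N \<times> 'n)^('N \<times> 'n)"
  have comp: "(?P *v x) $ (i, l) = (\<Sum>k\<in>S. xi k $ i * d k $ l)" for i l
  proof -
    have "(?P *v x) $ (i, l) = (\<Sum>c\<in>UNIV. (\<Sum>k\<in>S. xi k $ i * xi k $ fst c * E k $ l $ snd c) * x $ c)"
      by (simp add: matrix_vector_mult_def)
    also have "\<dots> = (\<Sum>i'\<in>UNIV. \<Sum>l'\<in>UNIV. (\<Sum>k\<in>S. xi k $ i * xi k $ i' * E k $ l $ l') * x $ (i', l'))"
      by (subst sum_pair) simp
    also have "\<dots> = (\<Sum>k\<in>S. \<Sum>i'\<in>UNIV. \<Sum>l'\<in>UNIV. xi k $ i * xi k $ i' * E k $ l $ l' * x $ (i', l'))"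
      by (simp add: sum_distrib_right sum.swap[of _ S])
    also have "\<dots> = (\<Sum>k\<in>S. xi k $ i * (\<Sum>l'\<in>UNIV. E k $ l $ l' * (\<Sum>i'\<in>UNIV. xi k $ i' * x $ (i', l'))))"
      by (intro sum.cong refl) (simp add: sum_distrib_left sum_distrib_right sum.swap[of _ "UNIV::'N set"] mult.assoc mult.left_commute)
    also have "\<dots> = (\<Sum>k\<in>S. xi k $ i * d k $ l)"
      by (simp add: d_def cc_def col_def matrix_vector_mult_def inner_vec_def)
    finally show ?thesis .
  qed
  have "(norm (?P *v x))^2 = (\<Sum>i\<in>UNIV. \<Sum>l\<in>UNIV. (\<Sum>k\<in>S. xi k $ i * d k $ l)^2)"
    unfolding norm_sq_pair comp ..
  also have "\<dots> = (\<Sum>l\<in>UNIV. \<Sum>i\<in>UNIV. (\<Sum>k\<in>S. d k $ l * xi k $ i)^2)"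
    by (subst sum.swap) (simp add: mult.commute)
  also have "\<dots> = (\<Sum>l\<in>UNIV. (norm (\<Sum>k\<in>S. (d k $ l) *\<^sub>R xi k))^2)"
    by (simp add: norm_sq_vec sum_component)
  also have "\<dots> = (\<Sum>l\<in>UNIV. \<Sum>k\<in>S. (d k $ l)^2)"
    by (simp add: norm_comb)
  also have "\<dots> = (\<Sum>k\<in>S. (norm (d k))^2)"
    by (simp add: norm_sq_vec sum.swap[of _ S])
  also have "\<dots> \<le> (\<Sum>k\<in>S. L^2 * (norm (cc k))^2)"
  proof (rule sum_mono)
    fix k assume k: "k \<in> S"
    have "norm (d k) \<le> L * norm (cc k)" unfolding d_def by (rule bound[OF k])
    hence "(norm (d k))^2 \<le> (L * norm (cc k))^2" by (intro power_mono) auto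
    thus "(norm (d k))^2 \<le> L^2 * (norm (cc k))^2" by (simp add: power_mult_distrib)
  qed
  also have "\<dots> = L^2 * (\<Sum>l\<in>UNIV. \<Sum>k\<in>S. (xi k \<bullet> col l)^2)"
    by (simp add: sum_distrib_left norm_sq_vec cc_def sum.swap[of _ S])
  also have "\<dots> \<le> L^2 * (\<Sum>l\<in>UNIV. (norm (col l))^2)"
    by (intro mult_left_mono sum_mono bessel) auto
  also have "\<dots> = L^2 * (norm x)^2"
    by (simp add: norm_sq_pair norm_sq_vec col_def sum.swap[of _ "UNIV::'n set"])
  also have "\<dots> = (L * norm x)^2" by (simp add: power_mult_distrib)
  finally show ?thesis by (rule power2_le_imp_le) (use L in simp)
qed

fun ps :: "('a \<Rightarrow> real) \<Rightarrow> 'a \<Rightarrow> 'a list \<Rightarrow> real" where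
  "ps f x [] = 0"
| "ps f x (y # ys) = (f x - f y)^2 + ps f y ys"

lemma ps_nonneg: "ps f x xs \<ge> 0"
  by (induction xs arbitrary: x) auto

lemma cs2:
  fixes a b B :: real and n :: nat
  assumes "b^2 \<le> n * B" "B \<ge> 0"
  shows "(a + b)^2 \<le> (1 + n) * (a^2 + B)"
proof (cases "n = 0")
  case True
  hence "b = 0" using assms by simp
  thus ?thesis using assms True by simp
next
  case False
  hence n: "real n > 0" by simp
  have "2 * a * b \<le> n * a^2 + b^2 / n"
  proof -
    have "0 \<le> (n * a - b)^2 / n" using n by simp
    also have "(n * a - b)^2 / n = n * a^2 - 2 * a * b + b^2 / n"
      using n by (simp add: power2_eq_square field_simps)
    finally show ?thesis by simp
  qed
  hence "(a + b)^2 \<le> (1 + n) * a^2 + (1 + 1 / n) * b^2"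
    by (simp add: power2_eq_square algebra_simps add_divide_distrib)
  also have "(1 + 1 / n) * b^2 \<le> (1 + 1 / n) * (n * B)"
    using assms(1) n by (intro mult_left_mono) auto
  also have "(1 + 1 / n) * (n * B) = (1 + n) * B" using n by (simp add: field_simps)
  finally show ?thesis by (simp add: algebra_simps)
qed

lemma path_G1:
  assumes "rtrancl_path E x xs y"
  shows "(f x - f y)^2 \<le> length xs * ps f x xs"
  using assms
proof (induction rule: rtrancl_path.induct)
  case (base x) thus ?case by simp
next
  case (step x x' xs z)
  have "(f x - f z)^2 = ((f x - f x') + (f x' - f z))^2" by simp
  also have "\<dots> \<le> (1 + length xs) * ((f x - f x')^2 + ps f x' xs)"
    by (rule cs2[OF step.IH ps_nonneg])
  finally show ?case by simp
qed

lemma path_G2: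
  assumes "rtrancl_path E x xs y"
  shows "(f x)^2 \<le> (length xs + 1) * (ps f x xs + (f y)^2)
     \<and> (\<Sum>w\<leftarrow>x # xs. (f w)^2) \<le> (length xs + 1) * (length xs + 2) / 2 * (ps f x xs + (f y)^2)"
  using assms
proof (induction rule: rtrancl_path.induct)
  case (base x) thus ?case by simp
next
  case (step x x' xs z)
  let ?n = "length xs" and ?L = "ps f x' xs + (f z)^2" and ?d = "(f x - f x')^2"
  have L0: "?L \<ge> 0" using ps_nonneg[of f x' xs] by simp
  have h1: "(f x)^2 \<le> (?n + 2) * (?d + ?L)"
  proof -
    have "(f x)^2 = ((f x - f x') + f x')^2" by simp
    also have "\<dots> \<le> (1 + (?n + 1)) * (?d + ?L)"
      by (rule cs2) (use step.IH L0 in simp_all)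
    finally show ?thesis by (simp add: algebra_simps)
  qed
  have "(\<Sum>w\<leftarrow>x # x' # xs. (f w)^2) = (f x)^2 + (\<Sum>w\<leftarrow>x' # xs. (f w)^2)" by simp
  also have "\<dots> \<le> (?n + 2) * (?d + ?L) + (?n + 1) * (?n + 2) / 2 * ?L"
    using h1 step.IH by linarith
  also have "\<dots> \<le> (?n + 2) * (?n + 3) / 2 * (?d + ?L)"
  proof -
    have "(?n + 1) * (?n + 2) / 2 * ?L \<le> (?n + 1) * (?n + 2) / 2 * (?d + ?L)"
      by (intro mult_left_mono) auto
    moreover have "real (?n + 2) * (?d + ?L) + real ((?n + 1) * (?n + 2)) / 2 * (?d + ?L) = real ((?n + 2) * (?n + 3)) / 2 * (?d + ?L)"
      by (simp add: field_simps)
    ultimately show ?thesis by linarith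
  qed
  finally show ?case using h1 by (simp add: algebra_simps)
qed

lemma path_G3:
  fixes a :: "'a \<Rightarrow> 'a \<Rightarrow> real"
  assumes "rtrancl_path E x xs y" "distinct (x # xs)"
    and a: "\<And>i j. E i j \<Longrightarrow> a i j = 1" "\<And>i j. a i j \<ge> 0" "\<And>i j. E i j \<Longrightarrow> E j i"
  shows "2 * ps f x xs \<le> (\<Sum>i\<in>set (x # xs). \<Sum>j\<in>set (x # xs). a i j * (f i - f j)^2)"
  using assms(1,2)
proof (induction rule: rtrancl_path.induct)
  case (base x) thus ?case by (simp add: a)
next
  case (step x x' xs z)
  let ?T = "set (x' # xs)" and ?g = "\<lambda>i j. a i j * (f i - f j)^2"
  have xT: "x \<notin> ?T" using step.prems by simp
  have g0: "?g i j \<ge> 0" for i j using a(2)[of i j] by simp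
  have IH: "2 * ps f x' xs \<le> (\<Sum>i\<in>?T. \<Sum>j\<in>?T. ?g i j)" using step.IH step.prems by simp
  have s1: "?g x x' \<le> (\<Sum>j\<in>?T. ?g x j)" by (rule member_le_sum) (use g0 in auto)
  have s2: "?g x' x \<le> (\<Sum>i\<in>?T. ?g i x)" by (rule member_le_sum[of x' ?T "\<lambda>i. ?g i x"]) (use g0 in auto)
  have e1: "?g x x' = (f x - f x')^2" using a(1)[OF step.hyps(1)] by simp
  have e2: "?g x' x = (f x - f x')^2" using a(1)[OF a(3)[OF step.hyps(1)]] by (simp add: power2_commute)
  have "(\<Sum>i\<in>insert x ?T. \<Sum>j\<in>insert x ?T. ?g i j) =
      ?g x x + (\<Sum>j\<in>?T. ?g x j) + ((\<Sum>i\<in>?T. ?g i x) + (\<Sum>i\<in>?T. \<Sum>j\<in>?T. ?g i j))"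
    using xT by (simp add: sum.distrib)
  moreover have "?g x x = 0" by simp
  ultimately have "(\<Sum>i\<in>insert x ?T. \<Sum>j\<in>insert x ?T. ?g i j) \<ge> 2 * (f x - f x')^2 + 2 * ps f x' xs"
    using s1 s2 e1 e2 IH by linarith
  thus ?case by simp
qed

lemma final_arith:
  fixes N :: nat and K lam :: real
  assumes "1 \<le> K * lam" "K \<le> real N * (real N ^ 2 - real N + 4) / 4" "N \<ge> 1" "lam > 0"
  shows "lambda_H N \<le> lam"
proof -
  have K0: "K > 0" using assms(1,4) by (metis mult_nonpos_nonneg not_le order_less_imp_le zero_less_one le_less_trans)
  have pos: "real N * (real N ^ 2 - real N + 4) > 0"
  proof -
    have h: "real N ^ 2 - real N \<ge> 0" using assms(3) by (simp add: power2_eq_square)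
    have "real N > 0" using assms(3) by simp
    moreover have "real N ^ 2 - real N + 4 > 0" using h by linarith
    ultimately show ?thesis by (rule mult_pos_pos)
  qed
  have "lambda_H N = 4 / (real N * (real N ^ 2 - real N + 4))" by (simp add: lambda_H_def)
  also have "\<dots> \<le> 1 / K" using K0 pos assms(2) by (simp add: field_simps)
  also have "\<dots> \<le> lam" using K0 assms(1) by (simp add: field_simps mult.commute)
  finally show ?thesis .
qed

context
  fixes adj :: "nat \<Rightarrow> 'N::finite \<Rightarrow> 'N \<Rightarrow> bool" and pin :: "nat \<Rightarrow> 'N \<Rightarrow> bool" and p :: nat
  assumes noloop: "\<And>i. \<not> adj p i i" and sym: "\<And>i k. adj p i k = adj p k i"
begin

abbreviation "a \<equiv> aij adj p"
abbreviation "H \<equiv> Hmat adj pin p"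
definition pp :: "'N \<Rightarrow> real" where "pp i = (if pin p i then 1 else 0)"

lemma a_simps: "a i i = 0" "a i j = a j i" "a i j \<ge> 0" "adj p i j \<Longrightarrow> a i j = 1" "\<not> adj p i j \<Longrightarrow> a i j = 0"
  using noloop sym by (auto simp: aij_def)

lemma Hv: "(H *v v) $ i = (\<Sum>j\<in>UNIV. a i j * (v$i - v$j)) + pp i * v$i"
proof -
  have e: "H $ i $ j = - a i j + (if i = j then (\<Sum>k\<in>UNIV. a i k) + pp i else 0)" for j
    by (auto simp: Hmat_def laplacian_def pp_def a_simps)
  have "(H *v v) $ i = (\<Sum>j\<in>UNIV. (- a i j + (if i = j then (\<Sum>k\<in>UNIV. a i k) + pp i else 0)) * v $ j)"
    by (simp add: matrix_vector_mult_def e)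
  also have "\<dots> = (\<Sum>j\<in>UNIV. - (a i j * v$j) + (if i = j then ((\<Sum>k\<in>UNIV. a i k) + pp i) * v$i else 0))"
    by (intro sum.cong refl) (auto simp: a_simps)
  also have "\<dots> = - (\<Sum>j\<in>UNIV. a i j * v$j) + ((\<Sum>k\<in>UNIV. a i k) + pp i) * v$i"
    by (simp add: sum_subtractf)
  also have "\<dots> = (\<Sum>j\<in>UNIV. a i j * (v$i - v$j)) + pp i * v$i"
    by (simp add: right_diff_distrib sum_subtractf sum_distrib_right sum_distrib_left algebra_simps)
  finally show ?thesis .
qed

lemma H_symm: "symm H"
proof -
  have ent: "H $ i $ j = H $ j $ i" for i j
    unfolding Hmat_def laplacian_def using a_simps(2)[of i j] by auto
  have "transpose H = H"
    unfolding transpose_def vec_eq_iff using ent by simp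
  thus ?thesis unfolding symm_def using inner_mv[of H] by simp
qed

definition Qe :: "real^'N \<Rightarrow> real" where
  "Qe v = (\<Sum>i\<in>UNIV. \<Sum>j\<in>UNIV. a i j * (v$i - v$j)^2) / 2"
definition Qp :: "real^'N \<Rightarrow> real" where
  "Qp v = (\<Sum>i\<in>UNIV. pp i * (v$i)^2)"

lemma Qe_nonneg: "Qe v \<ge> 0" unfolding Qe_def by (intro divide_nonneg_pos sum_nonneg) (auto simp: a_simps)
lemma Qp_nonneg: "Qp v \<ge> 0" unfolding Qp_def by (intro sum_nonneg) (auto simp: pp_def)

lemma Qform: "(H *v v) \<bullet> v = Qe v + Qp v"
proof -
  define X where "X = (\<Sum>i\<in>UNIV. \<Sum>j\<in>UNIV. a i j * (v$i - v$j) * v$i)"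
  have "(H *v v) \<bullet> v = (\<Sum>i\<in>UNIV. (H *v v)$i * v$i)" by (simp add: inner_vec_def)
  also have "\<dots> = X + Qp v"
    by (simp add: Hv X_def Qp_def distrib_right sum.distrib sum_distrib_right power2_eq_square mult.assoc)
  finally have 1: "(H *v v) \<bullet> v = X + Qp v" .
  have "X = (\<Sum>j\<in>UNIV. \<Sum>i\<in>UNIV. a i j * (v$i - v$j) * v$i)" unfolding X_def by (rule sum.swap)
  also have "\<dots> = (\<Sum>j\<in>UNIV. \<Sum>i\<in>UNIV. a j i * (v$i - v$j) * v$i)" by (simp add: a_simps(2))
  finally have 2: "X = (\<Sum>i\<in>UNIV. \<Sum>j\<in>UNIV. a i j * (v$j - v$i) * v$j)" .
  have "2 * X = (\<Sum>i\<in>UNIV. \<Sum>j\<in>UNIV. a i j * (v$i - v$j) * v$i + a i j * (v$j - v$i) * v$j)"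
  proof -
    have "2 * X = X + X" by simp
    also have "\<dots> = (\<Sum>i\<in>UNIV. \<Sum>j\<in>UNIV. a i j * (v$i - v$j) * v$i) + (\<Sum>i\<in>UNIV. \<Sum>j\<in>UNIV. a i j * (v$j - v$i) * v$j)"
      using 2 unfolding X_def by (rule arg_cong2[where f="(+)", OF refl])
    finally show ?thesis by (simp add: sum.distrib)
  qed
  also have "\<dots> = (\<Sum>i\<in>UNIV. \<Sum>j\<in>UNIV. a i j * (v$i - v$j)^2)"
    by (intro sum.cong refl) (simp add: power2_eq_square algebra_simps)
  finally have "X = Qe v" unfolding Qe_def by simp
  with 1 show ?thesis by simp
qed

lemma path_Qe:
  assumes "rtrancl_path (adj p) x xs y" "distinct (x # xs)"
  shows "ps (\<lambda>i. v$i) x xs \<le> Qe v"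
proof -
  have "2 * ps (\<lambda>i. v$i) x xs \<le> (\<Sum>i\<in>set (x # xs). \<Sum>j\<in>set (x # xs). a i j * (v$i - v$j)^2)"
    by (rule path_G3[OF assms]) (auto simp: a_simps sym)
  also have "\<dots> \<le> (\<Sum>i\<in>UNIV. \<Sum>j\<in>set (x # xs). a i j * (v$i - v$j)^2)"
    by (rule sum_mono2) (auto intro!: sum_nonneg simp: a_simps)
  also have "\<dots> \<le> (\<Sum>i\<in>UNIV. \<Sum>j\<in>UNIV. a i j * (v$i - v$j)^2)"
    by (intro sum_mono sum_mono2) (auto simp: a_simps)
  finally show ?thesis unfolding Qe_def by simp
qed

lemma graph_eig:
  assumes ev: "H *v v = lam *\<^sub>R v" and v0: "v \<noteq> 0" and lpos: "lam > 0"
  shows "lam \<ge> lambda_H CARD('N)"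
proof -
  let ?N = "CARD('N)"
  let ?f = "\<lambda>i. v$i"
  have N1: "?N \<ge> 1" by (simp add: Suc_le_eq)
  have Q: "Qe v + Qp v = lam * (v \<bullet> v)" using Qform[of v] ev by simp
  have vv: "v \<bullet> v > 0" using v0 by simp
  obtain i0 where i0: "\<And>j. \<bar>v$j\<bar> \<le> \<bar>v$i0\<bar>"
  proof -
    have "Max (range (\<lambda>j. \<bar>v$j\<bar>)) \<in> range (\<lambda>j. \<bar>v$j\<bar>)" by (intro Max_in) auto
    then obtain i0 where "Max (range (\<lambda>j. \<bar>v$j\<bar>)) = \<bar>v$i0\<bar>" by blast
    moreover have "\<bar>v$j\<bar> \<le> Max (range (\<lambda>j. \<bar>v$j\<bar>))" for j by (intro Max_ge) auto
    ultimately show ?thesis using that by metis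
  qed
  let ?M = "(v$i0)^2"
  have Mj: "(v$j)^2 \<le> ?M" for j using i0[of j] by (simp add: abs_le_square_iff)
  have vvdef: "v \<bullet> v = (\<Sum>i\<in>UNIV. (v$i)^2)" by (simp add: inner_vec_def power2_eq_square)
  have vvM: "v \<bullet> v \<le> ?N * ?M"
  proof -
    have "(\<Sum>i\<in>UNIV. (v$i)^2) \<le> (\<Sum>i\<in>(UNIV::'N set). ?M)" by (intro sum_mono Mj)
    thus ?thesis using vvdef by simp
  qed
  show ?thesis
  proof (cases "\<exists>j. (adj p)\<^sup>*\<^sup>* i0 j \<and> pin p j")
    case True
    then obtain j where j: "(adj p)\<^sup>*\<^sup>* i0 j" "pin p j" by blast
    obtain xs0 where "rtrancl_path (adj p) i0 xs0 j" using j(1) rtranclp_eq_rtrancl_path by metis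
    then obtain xs where P: "rtrancl_path (adj p) i0 xs j" and D: "distinct (i0 # xs)"
      using rtrancl_path_distinct by metis
    let ?L = "ps ?f i0 xs + (v$j)^2"
    let ?n = "length xs"
    have G2: "(v$i0)^2 \<le> (?n + 1) * ?L \<and> (\<Sum>w\<leftarrow>i0 # xs. (v$w)^2) \<le> (?n + 1) * (?n + 2) / 2 * ?L"
      by (rule path_G2[OF P])
    have LQ: "?L \<le> Qe v + Qp v"
    proof -
      have "ps ?f i0 xs \<le> Qe v" by (rule path_Qe[OF P D])
      moreover have "(v$j)^2 \<le> Qp v" unfolding Qp_def
        using member_le_sum[of j UNIV "\<lambda>i. pp i * (v$i)^2"] j(2) by (auto simp: pp_def)
      ultimately show ?thesis by simp
    qed
    let ?T = "set (i0 # xs)"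
    have cardT: "card ?T = ?n + 1" using D distinct_card by fastforce
    have nN: "?n + 1 \<le> ?N" using cardT card_mono[of UNIV ?T] by simp
    have sumT: "(\<Sum>w\<in>?T. (v$w)^2) = (\<Sum>w\<leftarrow>i0 # xs. (v$w)^2)"
      using D by (simp add: sum_list_distinct_conv_sum_set)
    have split: "v \<bullet> v = (\<Sum>w\<in>?T. (v$w)^2) + (\<Sum>w\<in>UNIV - ?T. (v$w)^2)"
      unfolding vvdef using sum.subset_diff[of ?T UNIV "\<lambda>w. (v$w)^2"] by simp
    have "(\<Sum>w\<in>UNIV - ?T. (v$w)^2) \<le> (\<Sum>w\<in>UNIV - ?T. ?M)" by (intro sum_mono Mj)
    also have "\<dots> = real (?N - (?n + 1)) * ?M" using cardT by (simp add: card_Diff_subset)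
    also have "\<dots> \<le> real (?N - (?n + 1)) * ((?n + 1) * ?L)"
      using G2 by (intro mult_left_mono) auto
    finally have r1: "(\<Sum>w\<in>UNIV - ?T. (v$w)^2) \<le> real (?N - (?n + 1)) * ((?n + 1) * ?L)" .
    have r2: "(\<Sum>w\<in>?T. (v$w)^2) \<le> (?n + 1) * (?n + 2) / 2 * ?L" using G2 sumT by simp
    have "v \<bullet> v \<le> (?n + 1) * (?n + 2) / 2 * ?L + real (?N - (?n + 1)) * ((?n + 1) * ?L)"
      using split r1 r2 by linarith
    also have "\<dots> = ((?n + 1) * (?n + 2) / 2 + real (?N - (?n + 1)) * (?n + 1)) * ?L"
      by (simp add: algebra_simps)
    also have "\<dots> \<le> (?N * (?N + 1) / 2) * ?L"
    proof (rule mult_right_mono)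
      show "0 \<le> ?L" using ps_nonneg[of ?f i0 xs] by simp
      define m where "m = ?n + 1"
      have mN: "m \<le> ?N" using nN m_def by simp
      have "real (?N - m) = real ?N - real m" using mN by simp
      moreover have "real m * (real m + 1) / 2 + (real ?N - real m) * real m \<le> real ?N * (real ?N + 1) / 2"
      proof -
        have "0 \<le> (real ?N - real m)^2 + (real ?N - real m)" using mN by simp
        thus ?thesis by (simp add: power2_eq_square field_simps)
      qed
      ultimately show "(?n + 1) * (?n + 2) / 2 + real (?N - (?n + 1)) * (?n + 1) \<le> ?N * (?N + 1) / 2"
        unfolding m_def by (simp add: algebra_simps)
    qed
    also have "\<dots> \<le> (?N * (?N + 1) / 2) * (lam * (v \<bullet> v))"
      using LQ Q by (intro mult_left_mono) auto
    finally have "1 * (v \<bullet> v) \<le> (?N * (?N + 1) / 2 * lam) * (v \<bullet> v)" by (simp add: algebra_simps)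
    hence one0: "1 \<le> (?N * (?N + 1) / 2) * lam" using vv by (simp only: mult_le_cancel_right_pos)
    have one: "1 \<le> (real ?N * (real ?N + 1) / 2) * lam" using one0 by (simp add: algebra_simps)
    show ?thesis
    proof (rule final_arith[OF one _ N1 lpos])
      have "0 \<le> (real ?N - 1) * (real ?N - 2)"
      proof (cases "?N = 1")
        case False hence "?N \<ge> 2" using N1 by linarith
        hence "real ?N \<ge> 2" by simp
        thus ?thesis by simp
      qed simp
      hence a: "2 * (real ?N + 1) \<le> real ?N ^ 2 - real ?N + 4" by (simp add: power2_eq_square algebra_simps)
      have "real ?N * (2 * (real ?N + 1)) \<le> real ?N * (real ?N ^ 2 - real ?N + 4)"
        by (rule mult_left_mono[OF a]) simp
      hence "real ?N * (2 * (real ?N + 1)) / 4 \<le> real ?N * (real ?N ^ 2 - real ?N + 4) / 4"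
        by (rule divide_right_mono) simp
      thus "real ?N * (real ?N + 1) / 2 \<le> real ?N * (real ?N ^ 2 - real ?N + 4) / 4" by simp
    qed
  next
    case False
    define C where "C = {j. (adj p)\<^sup>*\<^sup>* i0 j}"
    define ind :: "real^'N" where "ind = (\<chi> j. if j \<in> C then 1 else 0)"
    have i0C: "i0 \<in> C" by (simp add: C_def)
    have nopin: "\<not> pin p j" if "j \<in> C" for j using False that by (auto simp: C_def)
    have clos: "j \<in> C \<longleftrightarrow> k \<in> C" if "adj p j k" for j k
    proof
      assume "j \<in> C" thus "k \<in> C" using that by (auto simp: C_def)
    next
      assume "k \<in> C" thus "j \<in> C" using that sym[of j k] by (auto simp: C_def)
    qed
    have Hind: "H *v ind = 0"
    proof -
      have "(H *v ind) $ i = 0" for i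
      proof -
        have t: "a i j * (ind$i - ind$j) = 0" for j
          using clos[of i j] by (cases "adj p i j") (auto simp: a_simps ind_def)
        have "pp i * ind$i = 0" using nopin[of i] by (auto simp: pp_def ind_def)
        thus ?thesis by (simp add: Hv t)
      qed
      thus ?thesis by (simp add: vec_eq_iff)
    qed
    have "0 = (H *v ind) \<bullet> v" by (simp add: Hind)
    also have "\<dots> = ind \<bullet> (H *v v)" using H_symm by (simp add: symm_def)
    also have "\<dots> = lam * (ind \<bullet> v)" by (simp add: ev)
    finally have "ind \<bullet> v = 0" using lpos by simp
    moreover have "ind \<bullet> v = (\<Sum>i\<in>UNIV. if i \<in> C then v$i else 0)"
      unfolding inner_vec_def by (intro sum.cong refl) (simp add: ind_def)
    moreover have "(\<Sum>i\<in>UNIV. if i \<in> C then v$i else 0) = (\<Sum>j\<in>C. v$j)"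
      by (simp add: sum.inter_restrict[symmetric])
    ultimately have sC: "(\<Sum>j\<in>C. v$j) = 0" by simp
    have "\<exists>i1\<in>C. v$i1 * v$i0 \<le> 0"
    proof (rule ccontr)
      assume "\<not> (\<exists>i1\<in>C. v$i1 * v$i0 \<le> 0)"
      hence pos: "v$j * v$i0 > 0" if "j \<in> C" for j using that by (auto simp: not_le)
      have "0 < (\<Sum>j\<in>C. v$j * v$i0)"
        by (rule sum_pos) (use pos i0C in auto)
      also have "\<dots> = 0" using sC by (simp add: sum_distrib_right[symmetric])
      finally show False by simp
    qed
    then obtain i1 where i1: "i1 \<in> C" "v$i1 * v$i0 \<le> 0" by blast
    have "(adj p)\<^sup>*\<^sup>* i0 i1" using i1(1) by (simp add: C_def)
    then obtain xs0 where "rtrancl_path (adj p) i0 xs0 i1" using rtranclp_eq_rtrancl_path by metis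
    then obtain xs where P: "rtrancl_path (adj p) i0 xs i1" and D: "distinct (i0 # xs)"
      using rtrancl_path_distinct by metis
    have cardT: "card (set (i0 # xs)) = length xs + 1" using D distinct_card by fastforce
    have nN: "length xs + 1 \<le> ?N" using cardT card_mono[of UNIV "set (i0 # xs)"] by simp
    have "(v$i0 - v$i1)^2 = ?M - 2 * (v$i1 * v$i0) + (v$i1)^2" by (simp add: power2_eq_square algebra_simps)
    hence "?M \<le> (v$i0 - v$i1)^2" using i1(2) zero_le_power2[of "v$i1"] by linarith
    also have "\<dots> \<le> length xs * ps ?f i0 xs" by (rule path_G1[OF P])
    also have "\<dots> \<le> (?N - 1) * (Qe v + Qp v)"
    proof (rule mult_mono)
      show "real (length xs) \<le> real (?N - 1)" using nN by simp
      show "ps ?f i0 xs \<le> Qe v + Qp v" using path_Qe[OF P D, where v=v] Qp_nonneg[of v] by simp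
    qed (use Qe_nonneg[of v] Qp_nonneg[of v] ps_nonneg in auto)
    finally have "?M \<le> (?N - 1) * (lam * (v \<bullet> v))" using Q by simp
    hence "?N * ?M \<le> ?N * ((?N - 1) * (lam * (v \<bullet> v)))" by (intro mult_left_mono) auto
    hence "v \<bullet> v \<le> ?N * ((?N - 1) * (lam * (v \<bullet> v)))" using vvM by linarith
    hence "1 * (v \<bullet> v) \<le> (real ?N * real (?N - 1) * lam) * (v \<bullet> v)" by (simp add: algebra_simps)
    hence one0: "1 \<le> (real ?N * real (?N - 1)) * lam" using vv by (simp only: mult_le_cancel_right_pos)
    have one: "1 \<le> (real ?N * real (?N - 1)) * lam" using one0 by simp
    show ?thesis
    proof (rule final_arith[OF one _ N1 lpos])
      have "0 \<le> (real ?N - 5/2)^2 + 7/4" by simp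
      hence a: "4 * (real ?N - 1) \<le> real ?N ^ 2 - real ?N + 4" by (simp add: power2_eq_square algebra_simps)
      have "real ?N * (4 * (real ?N - 1)) \<le> real ?N * (real ?N ^ 2 - real ?N + 4)"
        by (rule mult_left_mono[OF a]) simp
      hence "real ?N * (4 * (real ?N - 1)) / 4 \<le> real ?N * (real ?N ^ 2 - real ?N + 4) / 4"
        by (rule divide_right_mono) simp
      thus "real ?N * real (?N - 1) \<le> real ?N * (real ?N ^ 2 - real ?N + 4) / 4" using N1 by (simp add: of_nat_diff)
    qed
  qed
qed

end

theorem lemma5:
  fixes A :: "real^'n^'n" and B :: "real^'m^'n"
    and adj :: "nat \<Rightarrow> 'N::finite \<Rightarrow> 'N \<Rightarrow> bool" and pin :: "nat \<Rightarrow> 'N \<Rightarrow> bool"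
    and n0 :: nat and \<sigma> :: "real \<Rightarrow> nat" and tsw :: "nat \<Rightarrow> real" and \<tau> :: real
    and nn :: "nat \<Rightarrow> nat" and lam :: "nat \<Rightarrow> nat \<Rightarrow> real" and xi :: "nat \<Rightarrow> nat \<Rightarrow> real^'N"
    and \<alpha> tstar \<mu> lamM lamm :: real and K :: "real^'n^'m"
  assumes ctrb: "controllable A B"
    and sig_range: "\<And>t. t \<ge> 0 \<Longrightarrow> \<sigma> t \<in> {1..n0}"
    and ts0: "tsw 0 = 0" and tau_pos: "\<tau> > 0"
    and dwell: "\<And>j. tsw (Suc j) - tsw j \<ge> \<tau>"
    and sig_const: "\<And>j t. tsw j \<le> t \<Longrightarrow> t < tsw (Suc j) \<Longrightarrow> \<sigma> t = \<sigma> (tsw j)"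
    and no_loops: "\<And>p i. p \<in> {1..n0} \<Longrightarrow> \<not> adj p i i"
    and undirected: "\<And>t i k. t \<ge> 0 \<Longrightarrow> adj (\<sigma> t) i k = adj (\<sigma> t) k i"
    and nullity: "\<And>j. nn j = dim {x. Hmat adj pin (\<sigma> (tsw j)) *v x = 0}"
    and orthonormal: "\<And>j k k'. k < CARD('N) \<Longrightarrow> k' < CARD('N) \<Longrightarrow>
          xi j k \<bullet> xi j k' = (if k = k' then 1 else 0)"
    and eigvec: "\<And>j k. k < CARD('N) \<Longrightarrow>
          Hmat adj pin (\<sigma> (tsw j)) *v xi j k = lam j k *\<^sub>R xi j k"
    and eig_zero: "\<And>j k. k < nn j \<Longrightarrow> lam j k = 0"
    and eig_pos: "\<And>j k. nn j \<le> k \<Longrightarrow> k < CARD('N) \<Longrightarrow> lam j k > 0"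
    and eig_sorted: "\<And>j k k'. k \<le> k' \<Longrightarrow> k' < CARD('N) \<Longrightarrow> lam j k \<le> lam j k'"
    and alpha_pos: "\<alpha> > 0" and tstar_pos: "tstar > 0"
    and mu: "\<mu> \<ge> 1 / lambda_H CARD('N)"
    and K_def: "K = \<mu> *\<^sub>R (transpose B ** matrix_inv (gramian A B \<alpha> tstar))"
    and lM: "is_eigenvalue (gramian A B 0 tstar) lamM"
    and lM_max: "\<And>l. is_eigenvalue (gramian A B 0 tstar) l \<Longrightarrow> l \<le> lamM"
    and lm: "is_eigenvalue (gramian A B 0 tstar) lamm"
    and lm_min: "\<And>l. is_eigenvalue (gramian A B 0 tstar) l \<Longrightarrow> lamm \<le> l"
  shows "sqrt (lamM / lamm) * exp (\<alpha> * tstar / 2) \<ge> 1 \<and>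
    (\<forall>j t. 0 \<le> t \<and> t \<le> tsw (Suc j) - tsw j \<longrightarrow>
       onorm (\<lambda>x. Phi A B K (nn j) (lam j) (xi j) t *v x)
         \<le> sqrt (lamM / lamm) * exp (\<alpha> * tstar / 2) * exp (- \<alpha> * t))"
proof -
  let ?G0 = "gramian A B 0 tstar" and ?Ga = "gramian A B \<alpha> tstar"
  let ?C0 = "sqrt (lamM / lamm) * exp (\<alpha> * tstar / 2)"
  have lamm_pos: "lamm > 0"
  proof -
    obtain v where v: "v \<noteq> 0" "?G0 *v v = lamm *\<^sub>R v" using lm unfolding is_eigenvalue_def by blast
    have "qf ?G0 v > 0" by (rule gram_pos[OF ctrb tstar_pos v(1)])
    hence "lamm * (v \<bullet> v) > 0" using v(2) by simp
    moreover have "v \<bullet> v > 0" using v(1) by simp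
    ultimately show ?thesis by (simp add: zero_less_mult_iff)
  qed
  have lmM: "lamm \<le> lamM" by (rule lM_max[OF lm])
  have low0: "lamm * (z \<bullet> z) \<le> qf ?G0 z" for z
  proof -
    obtain m where m: "is_eigenvalue ?G0 m" "\<forall>z. m * (z \<bullet> z) \<le> qf ?G0 z"
      using rayleigh_min[OF gram_symm] by blast
    have "lamm * (z \<bullet> z) \<le> m * (z \<bullet> z)" using lm_min[OF m(1)] by (intro mult_right_mono) auto
    thus ?thesis using m(2) by (meson order_trans)
  qed
  have up0: "qf ?G0 z \<le> lamM * (z \<bullet> z)" for z
  proof -
    obtain M where M: "is_eigenvalue ?G0 M" "\<forall>z. qf ?G0 z \<le> M * (z \<bullet> z)"
      using rayleigh_max[OF gram_symm] by blast
    have "M * (z \<bullet> z) \<le> lamM * (z \<bullet> z)" using lM_max[OF M(1)] by (intro mult_right_mono) auto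
    thus ?thesis using M(2) by (meson order_trans)
  qed
  have C0: "?C0 \<ge> 1"
  proof -
    have "lamM / lamm \<ge> 1" using lmM lamm_pos by simp
    hence "sqrt (lamM / lamm) \<ge> 1" by simp
    moreover have "exp (\<alpha> * tstar / 2) \<ge> 1" using alpha_pos tstar_pos by simp
    ultimately show ?thesis using one_le_mult_iff
      by (metis mult_mono' order_trans zero_le_one mult_1_left)
  qed
  define c where "c = exp (- \<alpha> * tstar) * lamm"
  have c_pos: "c > 0" using lamm_pos by (simp add: c_def)
  have lo: "c * (z \<bullet> z) \<le> qf ?Ga z" for z
  proof -
    have "c * (z \<bullet> z) = exp (- \<alpha> * tstar) * (lamm * (z \<bullet> z))" by (simp add: c_def)
    also have "\<dots> \<le> exp (- \<alpha> * tstar) * qf ?G0 z" by (intro mult_left_mono low0) auto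
    also have "\<dots> \<le> qf ?Ga z" by (rule gram_bounds(1)) (use alpha_pos in simp)
    finally show ?thesis .
  qed
  have hi: "qf ?Ga z \<le> lamM * (z \<bullet> z)" for z
    using gram_bounds(2)[of \<alpha> A B tstar z] up0[of z] alpha_pos by simp
  have inv: "invertible ?Ga" by (rule pd_invertible[OF c_pos lo])
  have PG: "matrix_inv ?Ga *v (?Ga *v z) = z" for z
    using invertible_matrix_inv(2)[OF inv] by (simp add: matrix_vector_mul_assoc)
  have sq: "sqrt (lamM / c) = ?C0"
  proof -
    have "lamM / c = (lamM / lamm) * exp (\<alpha> * tstar)" by (simp add: c_def exp_minus field_simps)
    hence "sqrt (lamM / c) = sqrt (lamM / lamm) * sqrt (exp (\<alpha> * tstar))" by (simp only: real_sqrt_mult)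
    moreover have "sqrt (exp (\<alpha> * tstar)) = exp (\<alpha> * tstar / 2)"
      by (rule real_sqrt_unique) (simp_all add: power2_eq_square mult_exp_exp[symmetric] exp_add[symmetric])
    ultimately show ?thesis by simp
  qed
  have blk: "norm (mexp (t *\<^sub>R (A - l *\<^sub>R (B ** K))) *v x) \<le> ?C0 * exp (- \<alpha> * t) * norm x"
    if l: "l * \<mu> \<ge> 1" and t: "t \<ge> 0" for l t x
  proof -
    let ?M = "A - l *\<^sub>R (B ** K)"
    have dec: "((?M ** ?Ga) *v z) \<bullet> z \<le> - \<alpha> * qf ?Ga z" for z
    proof -
      have "(?M ** ?Ga) *v z = A *v (?Ga *v z) - l *\<^sub>R ((B ** K) *v (?Ga *v z))"
        by (simp add: matrix_vector_mul_assoc[symmetric] matrix_vector_mult_diff_rdistrib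
            scaleR_matrix_vector_assoc[symmetric])
      also have "(B ** K) *v (?Ga *v z) = \<mu> *\<^sub>R (B *v (transpose B *v z))"
        unfolding K_def
        by (simp add: matrix_vector_mul_assoc[symmetric] scaleR_matrix_vector_assoc[symmetric]
            matrix_vector_mult_scaleR PG del: transpose_matrix_vector)
      finally have e: "((?M ** ?Ga) *v z) \<bullet> z = (A *v (?Ga *v z)) \<bullet> z - (l * \<mu>) * ((transpose B *v z) \<bullet> (transpose B *v z))"
        by (simp add: inner_diff_left inner_mv[of B] del: transpose_matrix_vector)
      have "(A *v (?Ga *v z)) \<bullet> z \<le> (transpose B *v z) \<bullet> (transpose B *v z) - \<alpha> * qf ?Ga z"
        by (rule gram_lyap) (use tstar_pos in simp)
      moreover have "(transpose B *v z) \<bullet> (transpose B *v z) \<le> (l * \<mu>) * ((transpose B *v z) \<bullet> (transpose B *v z))"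
        using mult_right_mono[OF l inner_ge_zero[of "transpose B *v z"]] by (simp del: transpose_matrix_vector)
      ultimately show ?thesis using e by linarith
    qed
    have "norm (mexp (t *\<^sub>R ?M) *v x) \<le> sqrt (lamM / c) * exp (- \<alpha> * t) * norm x"
      by (rule lyap[OF gram_symm c_pos lo hi dec t])
    thus ?thesis by (simp only: sq)
  qed
  have tsw_nn: "tsw j \<ge> 0" for j
  proof (induction j)
    case (Suc j) thus ?case using dwell[of j] tau_pos by linarith
  qed (simp add: ts0)
  have lamH_pos: "lambda_H CARD('N) > 0"
  proof -
    have "real CARD('N) ^ 2 - real CARD('N) \<ge> 0" by (simp add: power2_eq_square)
    hence "real CARD('N) ^ 2 - real CARD('N) + 4 > 0" by linarith
    thus ?thesis by (simp add: lambda_H_def)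
  qed
  have main: "onorm (\<lambda>x. Phi A B K (nn j) (lam j) (xi j) t *v x) \<le> ?C0 * exp (- \<alpha> * t)"
    if t: "0 \<le> t" for j t
  proof -
    let ?p = "\<sigma> (tsw j)"
    have pr: "?p \<in> {1..n0}" using sig_range tsw_nn by blast
    have nl: "\<And>i. \<not> adj ?p i i" using no_loops[OF pr] by blast
    have sy: "\<And>i k. adj ?p i k = adj ?p k i" using undirected[OF tsw_nn] by blast
    have lk: "lam j k * \<mu> \<ge> 1" if k: "k \<in> {nn j..<CARD('N)}" for k
    proof -
      have kN: "k < CARD('N)" using k by simp
      have pos: "lam j k > 0" using eig_pos k by simp
      have nz: "xi j k \<noteq> 0"
      proof
        assume "xi j k = 0"
        thus False using orthonormal[OF kN kN, of j] by simp
      qed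
      have "lam j k \<ge> lambda_H CARD('N)"
        by (rule graph_eig[OF nl sy eigvec[OF kN] nz pos])
      moreover have "\<mu> \<ge> 1 / lambda_H CARD('N)" by (rule mu)
      ultimately have "lam j k * \<mu> \<ge> lambda_H CARD('N) * (1 / lambda_H CARD('N))"
        using lamH_pos by (intro mult_mono) auto
      thus ?thesis using lamH_pos by simp
    qed
    have on: "orthon (xi j) {nn j..<CARD('N)}"
      by unfold_locales (auto simp: orthonormal)
    have L: "?C0 * exp (- \<alpha> * t) \<ge> 0" using C0 by simp
    have "norm (Phi A B K (nn j) (lam j) (xi j) t *v x) \<le> ?C0 * exp (- \<alpha> * t) * norm x" for x
      unfolding Phi_def
    proof (rule phi_bound[OF on _ L])
      fix k y assume "k \<in> {nn j..<CARD('N)}"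
      thus "norm (mexp (t *\<^sub>R (A - lam j k *\<^sub>R (B ** K))) *v y) \<le> ?C0 * exp (- \<alpha> * t) * norm y"
        by (rule blk[OF lk t])
    qed
    thus ?thesis by (intro onorm_bound L)
  qed
  show ?thesis using C0 main by (simp add: mult.assoc)
qed

end
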